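(* Let $n\ge 3$, $s,t\in\{-1,1\}^{n}$ with $s\neq t$ and $\sharp_{n}(s)=\sharp_{n}(t)$, and let $(\beta_{1},\beta_{2})\in(0,1)^2$ satisfy \[ \sum_{k=1}^{n}\Big(s_{k}\beta_{1}^{\sharp_{k}(s)}\beta_{2}^{\tilde\sharp_{k}(s)}-t_{k}\beta_{1}^{\sharp_{k}(t)}\beta_{2}^{\tilde\sharp_{k}(t)}\Big)=0 .\] Then for all $p\in(0,1)$, \[ \dim_{H}\mu^{p}_{\beta_{1},\beta_{2}}\le \widehat{SD}^{p}_{\beta_{1},\beta_{2}}< SD^{p}_{\beta_{1},\beta_{2}},\] and $\widehat{SD}^{p}_{\beta_{1},\beta_{2}}$ is continuous in $p\in(0,1)$.
   Context: For $\beta_{1},\beta_{2}\in(0,1)$ let $T_{1}(x)=\beta_{1}x+\beta_{1}$, $T_{2}(x)=\beta_{2}x-\beta_{2}$. For $p\in(0,1)$, $\mu^{p}_{\beta_{1},\beta_{2}}$ is the unique Borel probability measure on $\mathbb{R}$ with $\mu^{p}_{\beta_{1},\beta_{2}}=p\,T_{1}(\mu^{p}_{\beta_{1},\beta_{2}})+(1-p)\,T_{2}(\mu^{p}_{\beta_{1},\beta_{2}})$ (push-forwards). $SD^{p}_{\beta_{1},\beta_{2}}=\frac{-p\log p-(1-p)\log(1-p)}{-p\log\beta_{1}-(1-p)\log\beta_{2}}$. For $r\in\{-1,1\}^{n}$ and $1\le k\le n$, $\sharp_{k}(r)$ is the number of entries of $(r_1,\dots,r_k)$ equal to $1$ and $\tilde\sharp_{k}(r)=k-\sharp_{k}(r)$.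 Put $w_r=p^{\sharp_{n}(r)}(1-p)^{\tilde\sharp_{n}(r)}$, $p_{s,t}=w_s+w_t$, $\rho_r=\beta_{1}^{\sharp_{n}(r)}\beta_{2}^{\tilde\sharp_{n}(r)}$ (note $\rho_s=\rho_t$), and \[ \widehat{SD}^{p}_{\beta_{1},\beta_{2}}=\frac{-\sum_{r\in\{-1,1\}^{n}\setminus\{s,t\}}w_r\log w_r-p_{s,t}\log p_{s,t}}{-\sum_{r\in\{-1,1\}^{n}\setminus\{s,t\}}w_r\log \rho_r-p_{s,t}\log\rho_s},\] the similarity dimension of the system of $n$-fold compositions of $T_1,T_2$ in which the two (equal) maps indexed by $s$ and $t$ are merged with combined probability $p_{s,t}$. The Hausdorff dimension of a measure $\mu$ is $\inf\{\dim_H A: A\text{ Borel},\ \mu(A)=1\}$. *)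

theory Defs
  imports "HOL-Probability.Probability"
begin

definition hausdorff_pre :: "real \<Rightarrow> real \<Rightarrow> real set \<Rightarrow> ennreal" where
  "hausdorff_pre d \<delta> A =
     (INF U \<in> {U :: nat \<Rightarrow> real set. A \<subseteq> (\<Union>i. U i) \<and>
                 (\<forall>i. bounded (U i) \<and> diameter (U i) \<le> \<delta>)}.
        (\<Sum>i. ennreal (diameter (U i) powr d)))"

definition hausdorff_outer :: "real \<Rightarrow> real set \<Rightarrow> ennreal" where
  "hausdorff_outer d A = (SUP \<delta> \<in> {0<..}. hausdorff_pre d \<delta> A)"

definition hausdorff_dim :: "real set \<Rightarrow> real" where
  "hausdorff_dim A = Inf {d. 0 < d \<and> hausdorff_outer d A = 0}"

definition hausdorff_dim_measure :: "real measure \<Rightarrow> real" where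
  "hausdorff_dim_measure \<mu> =
     Inf {hausdorff_dim A | A. A \<in> sets borel \<and> measure \<mu> A = 1}"

definition T1 :: "real \<Rightarrow> real \<Rightarrow> real" where "T1 \<beta>1 x = \<beta>1 * x + \<beta>1"
definition T2 :: "real \<Rightarrow> real \<Rightarrow> real" where "T2 \<beta>2 x = \<beta>2 * x - \<beta>2"

definition ssm :: "real \<Rightarrow> real \<Rightarrow> real \<Rightarrow> real measure" where
  "ssm p \<beta>1 \<beta>2 = (THE \<mu>. sets \<mu> = sets borel \<and> prob_space \<mu> \<and>
      (\<forall>A \<in> sets borel. emeasure \<mu> A =
          ennreal p * emeasure (distr \<mu> borel (T1 \<beta>1)) A
        + ennreal (1 - p) * emeasure (distr \<mu> borel (T2 \<beta>2)) A))"

definition SD :: "real \<Rightarrow> real \<Rightarrow> real \<Rightarrow> real" where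
  "SD p \<beta>1 \<beta>2 = (- p * ln p - (1 - p) * ln (1 - p)) / (- p * ln \<beta>1 - (1 - p) * ln \<beta>2)"

text \<open>Sign sequences r in {-1,1}^n are int lists of length n; entry r_k is r ! (k-1).\<close>
definition sign_seqs :: "nat \<Rightarrow> int list set" where
  "sign_seqs n = {r. length r = n \<and> set r \<subseteq> {-1, 1}}"

definition nplus :: "nat \<Rightarrow> int list \<Rightarrow> nat" where
  "nplus k r = length (filter (\<lambda>x. x = 1) (take k r))"

definition nminus :: "nat \<Rightarrow> int list \<Rightarrow> nat" where
  "nminus k r = k - nplus k r"

definition wt :: "nat \<Rightarrow> real \<Rightarrow> int list \<Rightarrow> real" where
  "wt n p r = p ^ nplus n r * (1 - p) ^ nminus n r"

definition rho :: "nat \<Rightarrow> real \<Rightarrow> real \<Rightarrow> int list \<Rightarrow> real" where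
  "rho n \<beta>1 \<beta>2 r = \<beta>1 ^ nplus n r * \<beta>2 ^ nminus n r"

definition SDhat :: "nat \<Rightarrow> int list \<Rightarrow> int list \<Rightarrow> real \<Rightarrow> real \<Rightarrow> real \<Rightarrow> real" where
  "SDhat n s t p \<beta>1 \<beta>2 =
    (- (\<Sum>r \<in> sign_seqs n - {s, t}. wt n p r * ln (wt n p r))
       - (wt n p s + wt n p t) * ln (wt n p s + wt n p t))
  / (- (\<Sum>r \<in> sign_seqs n - {s, t}. wt n p r * ln (rho n \<beta>1 \<beta>2 r))
       - (wt n p s + wt n p t) * ln (rho n \<beta>1 \<beta>2 s))"

end

theory Submission
  imports Defs
begin

fun Sw :: "('a \<Rightarrow> real) \<Rightarrow> ('a \<Rightarrow> real) \<Rightarrow> 'a list \<Rightarrow> real \<Rightarrow> real" where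
  "Sw c b [] x = x"
| "Sw c b (i#w) x = c i * Sw c b w x + b i"

definition words :: "'a set \<Rightarrow> nat \<Rightarrow> 'a list set" where
  "words I K = {w. set w \<subseteq> I \<and> length w = K}"

lemma words_0: "words I 0 = {[]}"
  by (auto simp: words_def)

lemma words_Suc: "words I (Suc K) = (\<lambda>(i,w). i#w) ` (I \<times> words I K)"
  by (auto simp: words_def length_Suc_conv image_iff)

lemma finite_words: "finite I \<Longrightarrow> finite (words I K)"
  unfolding words_def by (rule finite_lists_length_eq)

lemma sum_prod_words:
  fixes g :: "'a \<Rightarrow> 'b::comm_semiring_1"
  assumes "finite I"
  shows "(\<Sum>w\<in>words I K. prod_list (map g w)) = (\<Sum>i\<in>I. g i) ^ K"
proof (induction K)
  case 0 then show ?case by (simp add: words_0)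
next
  case (Suc K)
  have inj: "inj_on (\<lambda>(i,w). i#w) (I \<times> words I K)" by (auto simp: inj_on_def)
  have "(\<Sum>w\<in>words I (Suc K). prod_list (map g w))
      = (\<Sum>(i,w)\<in>I \<times> words I K. g i * prod_list (map g w))"
    unfolding words_Suc by (subst sum.reindex[OF inj]) (simp add: case_prod_unfold)
  also have "\<dots> = (\<Sum>i\<in>I. g i) * (\<Sum>w\<in>words I K. prod_list (map g w))"
    by (simp add: sum_product sum.cartesian_product)
  finally show ?case using Suc by simp
qed

lemma Sw_dist:
  assumes "\<And>i. i \<in> set w \<Longrightarrow> 0 \<le> c i"
  shows "\<bar>Sw c b w x - Sw c b w y\<bar> = prod_list (map c w) * \<bar>x - y\<bar>"
  using assms
proof (induction w)
  case Nil then show ?case by simp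
next
  case (Cons i w)
  have "\<bar>Sw c b (i#w) x - Sw c b (i#w) y\<bar> = \<bar>c i * (Sw c b w x - Sw c b w y)\<bar>"
    by (simp add: algebra_simps)
  also have "\<dots> = c i * \<bar>Sw c b w x - Sw c b w y\<bar>" using Cons.prems by (simp add: abs_mult)
  finally show ?case using Cons by simp
qed

lemma continuous_Sw: "continuous_on UNIV (Sw c b w)"
  by (induction w) (auto intro!: continuous_intros)

lemma Sw_inj:
  assumes "\<And>i. i \<in> set w \<Longrightarrow> 0 < c i"
  shows "Sw c b w x = Sw c b w y \<longleftrightarrow> x = y"
proof -
  have "prod_list (map c w) > 0" using assms by (induction w) auto
  moreover have "\<bar>Sw c b w x - Sw c b w y\<bar> = prod_list (map c w) * \<bar>x - y\<bar>"
    using assms by (intro Sw_dist) (simp add: less_imp_le)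
  ultimately show ?thesis by auto
qed

lemma Sw_measurable[measurable]: "Sw c b w \<in> borel_measurable borel"
  by (rule borel_measurable_continuous_onI[OF continuous_Sw])

lemma iterate_measure:
  fixes \<mu> :: "real measure"
  assumes fin: "finite I" and sets: "sets \<mu> = sets borel"
    and fp: "\<And>A. A \<in> sets borel \<Longrightarrow>
          measure \<mu> A = (\<Sum>i\<in>I. q i * measure \<mu> ((\<lambda>x. c i * x + b i) -` A))"
  shows "A \<in> sets borel \<Longrightarrow>
     measure \<mu> A = (\<Sum>w\<in>words I K. prod_list (map q w) * measure \<mu> (Sw c b w -` A))"
proof (induction K arbitrary: A)
  case 0 then show ?case by (simp add: words_0)
next
  case (Suc K)
  have inj: "inj_on (\<lambda>(i,w). i#w) (I \<times> words I K)" by (auto simp: inj_on_def)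
  have mA: "(\<lambda>x. c i * x + b i) -` A \<in> sets borel" for i
  proof -
    have "(\<lambda>x. c i * x + b i) \<in> borel_measurable borel" by measurable
    from measurable_sets[OF this Suc.prems] show ?thesis by simp
  qed
  have "measure \<mu> A = (\<Sum>i\<in>I. q i * measure \<mu> ((\<lambda>x. c i * x + b i) -` A))"
    using fp Suc.prems by blast
  also have "\<dots> = (\<Sum>i\<in>I. q i * (\<Sum>w\<in>words I K. prod_list (map q w) *
          measure \<mu> (Sw c b w -` ((\<lambda>x. c i * x + b i) -` A))))"
    using Suc.IH[OF mA] by simp
  also have "\<dots> = (\<Sum>(i,w)\<in>I \<times> words I K. prod_list (map q (i#w)) * measure \<mu> (Sw c b (i#w) -` A))"
    by (simp add: sum.cartesian_product sum_distrib_left vimage_def mult.assoc)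
  also have "\<dots> = (\<Sum>w\<in>words I (Suc K). prod_list (map q w) * measure \<mu> (Sw c b w -` A))"
    unfolding words_Suc by (subst sum.reindex[OF inj]) (simp add: case_prod_unfold)
  finally show ?case .
qed


lemma hausdorff_outer_zeroI:
  assumes d: "0 < d"
  and cov: "\<And>\<epsilon>. 0 < \<epsilon> \<Longrightarrow> \<exists>U::nat \<Rightarrow> real set. E \<subseteq> (\<Union>i. U i) \<and> (\<forall>i. bounded (U i))
      \<and> summable (\<lambda>i. diameter (U i) powr d) \<and> (\<Sum>i. diameter (U i) powr d) \<le> \<epsilon>"
  shows "hausdorff_outer d E = 0"
proof -
  have "hausdorff_pre d \<delta> E \<le> 0" if "\<delta> > 0" for \<delta>
  proof (rule ennreal_le_epsilon)
    fix e :: real assume e: "0 < e"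
    define \<epsilon> where "\<epsilon> = min e (\<delta> powr d)"
    have "\<epsilon> > 0" using e that by (simp add: \<epsilon>_def)
    from cov[OF this] obtain U :: "nat \<Rightarrow> real set" where
      U: "E \<subseteq> (\<Union>i. U i)" "\<forall>i. bounded (U i)" "summable (\<lambda>i. diameter (U i) powr d)"
         "(\<Sum>i. diameter (U i) powr d) \<le> \<epsilon>" by blast
    have nn: "\<And>i. 0 \<le> diameter (U i) powr d" by simp
    have "diameter (U i) \<le> \<delta>" for i
    proof (rule ccontr)
      assume "\<not> ?thesis"
      then have "\<delta> powr d < diameter (U i) powr d"
        using that d by (intro powr_less_mono2) auto
      moreover have "diameter (U i) powr d \<le> (\<Sum>i. diameter (U i) powr d)"
        using sum_le_suminf[OF U(3), of "{i}"] nn by auto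
      ultimately show False using U(4) by (simp add: \<epsilon>_def)
    qed
    then have "U \<in> {U :: nat \<Rightarrow> real set. E \<subseteq> (\<Union>i. U i) \<and>
                 (\<forall>i. bounded (U i) \<and> diameter (U i) \<le> \<delta>)}" using U by auto
    then have "hausdorff_pre d \<delta> E \<le> (\<Sum>i. ennreal (diameter (U i) powr d))"
      unfolding hausdorff_pre_def by (rule INF_lower)
    also have "\<dots> = ennreal (\<Sum>i. diameter (U i) powr d)"
      by (rule suminf_ennreal2[OF nn U(3)])
    also have "\<dots> \<le> ennreal e" using U(4) by (simp add: \<epsilon>_def ennreal_leI)
    finally show "hausdorff_pre d \<delta> E \<le> 0 + ennreal e" by simp
  qed
  then show ?thesis unfolding hausdorff_outer_def
    by (intro antisym SUP_least) auto
qed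


lemma prod_list_map_mult: "prod_list (map (\<lambda>x. f x * g x) xs) = prod_list (map f xs) * (prod_list (map g xs) :: real)"
  by (induction xs) auto

lemma prod_list_nonneg': "(\<And>x. x \<in> set xs \<Longrightarrow> 0 \<le> f x) \<Longrightarrow> 0 \<le> prod_list (map f xs :: real list)"
  by (induction xs) auto

lemma prod_list_powr: fixes f :: "'a \<Rightarrow> real" shows "(\<And>x. x \<in> set xs \<Longrightarrow> 0 \<le> f x) \<Longrightarrow>
   prod_list (map f xs) powr e = prod_list (map (\<lambda>x. f x powr e) xs)"
proof (induction xs)
  case Nil then show ?case by simp
next
  case (Cons a xs)
  have "0 \<le> prod_list (map f xs)" using Cons.prems by (intro prod_list_nonneg') auto
  then show ?case using Cons by (simp add: powr_mult)
qed

lemma prod_list_pos: "(\<And>x. x \<in> set xs \<Longrightarrow> 0 < f x) \<Longrightarrow> 0 < prod_list (map f xs :: real list)"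
  by (induction xs) auto

lemma a_prod:
  fixes q c :: "'a \<Rightarrow> real"
  assumes "\<And>i. i \<in> set w \<Longrightarrow> 0 < q i" "\<And>i. i \<in> set w \<Longrightarrow> 0 < c i"
  shows "prod_list (map (\<lambda>i. exp \<eta> * c i powr d / q i) w)
      = exp \<eta> ^ length w * prod_list (map c w) powr d / prod_list (map q w)"
  using assms
proof (induction w)
  case Nil then show ?case by simp
next
  case (Cons i w)
  have "0 < prod_list (map c w)" "0 < prod_list (map q w)"
    using Cons.prems by (auto intro!: prod_list_pos)
  moreover have IH: "prod_list (map (\<lambda>i. exp \<eta> * c i powr d / q i) w)
      = exp \<eta> ^ length w * prod_list (map c w) powr d / prod_list (map q w)"
    using Cons by auto
  moreover have "0 < c i" "0 < q i" using Cons.prems by auto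
  ultimately show ?case
  proof -
    have pm: "(c i * prod_list (map c w)) powr d = c i powr d * prod_list (map c w) powr d"
      using \<open>0 < c i\<close> \<open>0 < prod_list (map c w)\<close> by (simp add: powr_mult)
    show ?thesis
      by (simp only: list.map prod_list.Cons IH length_Cons power_Suc pm) (simp add: field_simps)
  qed
qed


lemma ifs_full_measure:
  fixes \<mu> :: "real measure" and I :: "'a set" and q c b :: "'a \<Rightarrow> real"
  assumes fin: "finite I" and ps: "prob_space \<mu>" and sets: "sets \<mu> = sets borel"
  and qpos: "\<And>i. i\<in>I \<Longrightarrow> 0 < q i" and cpos: "\<And>i. i\<in>I \<Longrightarrow> 0 < c i"
  and fp: "\<And>A. A \<in> sets borel \<Longrightarrow>
          measure \<mu> A = (\<Sum>i\<in>I. q i * measure \<mu> ((\<lambda>x. c i * x + b i) -` A))"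
  and J: "measure \<mu> {-R..R} = 1"
  and \<theta>: "0 < \<theta>"
  and lam: "(\<Sum>i\<in>I. q i * (exp \<eta> * c i powr d / q i) powr \<theta>) < 1"
  and G: "G = {w \<in> words I K. prod_list (map c w) powr d * exp \<eta> ^ K * 2 ^ j \<le> prod_list (map q w)}"
  shows "measure \<mu> (UNIV - (\<Union>w\<in>G. Sw c b w ` {-R..R})) \<le>
           2 powr (j * \<theta>) * (\<Sum>i\<in>I. q i * (exp \<eta> * c i powr d / q i) powr \<theta>) ^ K"
proof -
  interpret prob_space \<mu> by (rule ps)
  have sp: "space \<mu> = UNIV" using sets_eq_imp_space_eq[OF sets] by simp
  define J where "J = {-R..R::real}"
  define EK where "EK = (\<Union>w\<in>G. Sw c b w ` J)"
  define a where "a i = exp \<eta> * c i powr d / q i" for i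
  have finG: "finite G" using finite_words[OF fin] G by auto
  have img_borel: "Sw c b w ` J \<in> sets borel" for w
  proof -
    have "compact (Sw c b w ` J)" unfolding J_def
      by (intro compact_continuous_image continuous_on_subset[OF continuous_Sw]) auto
    then show ?thesis by (intro borel_closed compact_imp_closed)
  qed
  have EK_borel: "EK \<in> sets borel" unfolding EK_def using finG img_borel by auto
  have C_borel: "UNIV - EK \<in> sets borel" using EK_borel by auto
  have J_borel: "J \<in> sets borel" unfolding J_def by simp
  have mJc: "measure \<mu> (UNIV - J) = 0"
    using prob_compl[of J] J J_borel sets sp unfolding J_def by auto
  have "measure \<mu> (UNIV - EK) = (\<Sum>w\<in>words I K. prod_list (map q w) * measure \<mu> (Sw c b w -` (UNIV - EK)))"
    by (rule iterate_measure[OF fin sets fp C_borel])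
  also have "\<dots> \<le> (\<Sum>w\<in>words I K. 2 powr (j * \<theta>) * prod_list (map (\<lambda>i. q i * a i powr \<theta>) w))"
  proof (rule sum_mono)
    fix w assume w: "w \<in> words I K"
    then have wI: "set w \<subseteq> I" and lw: "length w = K" by (auto simp: words_def)
    have qw: "0 < prod_list (map q w)" using wI qpos by (intro prod_list_pos) auto
    have cw: "0 < prod_list (map c w)" using wI cpos by (intro prod_list_pos) auto
    have aw: "prod_list (map a w) = exp \<eta> ^ K * prod_list (map c w) powr d / prod_list (map q w)"
      unfolding a_def lw[symmetric] using wI qpos cpos by (intro a_prod) auto
    have apos: "0 \<le> a i" if "i \<in> I" for i unfolding a_def using qpos[OF that] by simp
    have rhs: "2 powr (j * \<theta>) * prod_list (map (\<lambda>i. q i * a i powr \<theta>) w)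
       = prod_list (map q w) * (2 ^ j * prod_list (map a w)) powr \<theta>"
    proof -
      have "(2 ^ j * prod_list (map a w)) powr \<theta> = (2 ^ j) powr \<theta> * prod_list (map a w) powr \<theta>"
        using apos wI by (subst powr_mult) (auto intro!: prod_list_nonneg')
      also have "(2 ^ j :: real) powr \<theta> = 2 powr (j * \<theta>)"
        by (simp add: powr_realpow[symmetric] powr_powr)
      also have "prod_list (map a w) powr \<theta> = prod_list (map (\<lambda>i. a i powr \<theta>) w)"
        using apos wI by (intro prod_list_powr) auto
      finally show ?thesis by (simp add: prod_list_map_mult)
    qed
    show "prod_list (map q w) * measure \<mu> (Sw c b w -` (UNIV - EK))
        \<le> 2 powr (j * \<theta>) * prod_list (map (\<lambda>i. q i * a i powr \<theta>) w)"
    proof (cases "w \<in> G")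
      case True
      have "Sw c b w -` (UNIV - EK) \<subseteq> UNIV - J" unfolding EK_def using True by auto
      then have "measure \<mu> (Sw c b w -` (UNIV - EK)) \<le> measure \<mu> (UNIV - J)"
        using J_borel sets by (intro finite_measure_mono) auto
      then have "measure \<mu> (Sw c b w -` (UNIV - EK)) = 0" using mJc by (simp add: antisym)
      moreover have "0 \<le> 2 powr (j * \<theta>) * prod_list (map (\<lambda>i. q i * a i powr \<theta>) w)"
        using apos qpos wI by (intro mult_nonneg_nonneg prod_list_nonneg') (auto intro: less_imp_le)
      ultimately show ?thesis by simp
    next
      case False
      then have "prod_list (map c w) powr d * exp \<eta> ^ K * 2 ^ j > prod_list (map q w)"
        using w G by auto
      then have "1 \<le> 2 ^ j * prod_list (map a w)" unfolding aw using qw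
        by (simp add: field_simps)
      then have "1 \<le> (2 ^ j * prod_list (map a w)) powr \<theta>"
        using \<theta> by (simp add: ge_one_powr_ge_zero)
      moreover have "measure \<mu> (Sw c b w -` (UNIV - EK)) \<le> 1" by simp
      ultimately have "prod_list (map q w) * measure \<mu> (Sw c b w -` (UNIV - EK))
          \<le> prod_list (map q w) * (2 ^ j * prod_list (map a w)) powr \<theta>"
        using qw by (intro mult_left_mono order_trans[OF prob_le_1]) auto
      then show ?thesis unfolding rhs .
    qed
  qed
  also have "\<dots> = 2 powr (j * \<theta>) * (\<Sum>i\<in>I. q i * a i powr \<theta>) ^ K"
    by (simp add: sum_distrib_left[symmetric] sum_prod_words[OF fin])
  finally show ?thesis unfolding EK_def J_def a_def .
qed


lemma Sw_image_diam:
  fixes c :: "'a \<Rightarrow> real"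
  assumes "\<And>i. i \<in> set w \<Longrightarrow> 0 < c i" "0 \<le> R"
  shows "diameter (Sw c b w ` {-R..R}) \<le> prod_list (map c w) * (2 * R)"
proof (rule diameter_le)
  have "0 \<le> prod_list (map c w)" using assms by (intro prod_list_nonneg') (auto intro: less_imp_le)
  then show "Sw c b w ` {-R..R} \<noteq> {} \<or> 0 \<le> prod_list (map c w) * (2 * R)" using assms by simp
  fix x y assume "x \<in> Sw c b w ` {-R..R}" "y \<in> Sw c b w ` {-R..R}"
  then obtain x' y' where xy: "x = Sw c b w x'" "y = Sw c b w y'" "x' \<in> {-R..R}" "y' \<in> {-R..R}" by auto
  have "norm (x - y) = prod_list (map c w) * \<bar>x' - y'\<bar>"
    unfolding xy using assms by (simp add: Sw_dist less_imp_le)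
  also have "\<dots> \<le> prod_list (map c w) * (2 * R)"
    using xy \<open>0 \<le> prod_list (map c w)\<close> by (intro mult_left_mono) auto
  finally show "norm (x - y) \<le> prod_list (map c w) * (2 * R)" .
qed

lemma Sw_image_bounded: "bounded (Sw c b w ` {-R..R})"
  by (intro compact_imp_bounded compact_continuous_image continuous_on_subset[OF continuous_Sw]) auto

lemma ifs_cover:
  fixes I :: "'a set" and q c b :: "'a \<Rightarrow> real"
  assumes fin: "finite I"
  and qpos: "\<And>i. i\<in>I \<Longrightarrow> 0 < q i" and cpos: "\<And>i. i\<in>I \<Longrightarrow> 0 < c i"
  and qsum: "(\<Sum>i\<in>I. q i) = 1" and R: "0 \<le> R" and d: "0 < d" and \<eta>: "0 < \<eta>"
  and G: "\<And>K. G K = {w \<in> words I K. prod_list (map c w) powr d * exp \<eta> ^ K * 2 ^ j \<le> prod_list (map q w)}"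
  shows "\<exists>U::nat \<Rightarrow> real set. (\<Union>K. \<Union>w\<in>G K. Sw c b w ` {-R..R}) \<subseteq> (\<Union>i. U i) \<and> (\<forall>i. bounded (U i))
      \<and> summable (\<lambda>i. diameter (U i) powr d)
      \<and> (\<Sum>i. diameter (U i) powr d) \<le> (2 * R) powr d / 2 ^ j / (1 - inverse (exp \<eta>))"
proof -
  define J where "J = {-R..R::real}"
  define B where "B = (2 * R) powr d / 2 ^ j / (1 - inverse (exp \<eta>))"
  have finG: "finite (G K)" for K using finite_words[OF fin] G[of K] by auto
  define ws where "ws K = (SOME xs. set xs = G K \<and> distinct xs)" for K
  have ws: "set (ws K) = G K \<and> distinct (ws K)" for K
    unfolding ws_def by (rule someI_ex) (rule finite_distinct_list[OF finG])
  define U where "U m = (case prod_decode m of (K,i) \<Rightarrow>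
      if i < length (ws K) then Sw c b (ws K ! i) ` J else {})" for m
  define h where "h p = (case p of (K,i) \<Rightarrow> if i < length (ws K) then
      (2 * R) powr d * (prod_list (map q (ws K ! i)) / (exp \<eta> ^ K * 2 ^ j)) else 0)" for p
  have h_nn: "0 \<le> h p" for p
  proof -
    obtain K i where p: "p = (K,i)" by force
    show ?thesis
    proof (cases "i < length (ws K)")
      case True
      then have "ws K ! i \<in> G K" using ws[of K] by (metis nth_mem)
      then have "set (ws K ! i) \<subseteq> I" using G by (auto simp: words_def)
      then have "0 \<le> prod_list (map q (ws K ! i))" using qpos by (intro prod_list_nonneg') (auto intro: less_imp_le)
      then show ?thesis unfolding h_def p using True by simp
    qed (simp add: h_def p)
  qed
  have cov: "(\<Union>K. \<Union>w\<in>G K. Sw c b w ` J) \<subseteq> (\<Union>i. U i)"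
  proof
    fix x assume "x \<in> (\<Union>K. \<Union>w\<in>G K. Sw c b w ` J)"
    then obtain K w where w: "w \<in> G K" "x \<in> Sw c b w ` J" by auto
    then obtain i where i: "i < length (ws K)" "ws K ! i = w" using ws[of K] by (metis in_set_conv_nth)
    have "x \<in> U (prod_encode (K,i))" unfolding U_def using i w by simp
    then show "x \<in> (\<Union>i. U i)" by blast
  qed
  have bdd: "bounded (U m)" for m
    unfolding U_def J_def by (auto split: prod.split simp: Sw_image_bounded)
  have f_le: "diameter (U m) powr d \<le> h (prod_decode m)" for m
  proof -
    obtain K i where p: "prod_decode m = (K,i)" by force
    show ?thesis
    proof (cases "i < length (ws K)")
      case True
      define w where "w = ws K ! i"
      have "w \<in> G K" using ws[of K] True unfolding w_def by (metis nth_mem)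
      then have wI: "set w \<subseteq> I" and gw: "prod_list (map c w) powr d * exp \<eta> ^ K * 2 ^ j \<le> prod_list (map q w)"
        using G by (auto simp: words_def)
      have cw: "0 < prod_list (map c w)" using wI cpos by (intro prod_list_pos) auto
      have "diameter (U m) = diameter (Sw c b w ` J)" unfolding U_def p w_def using True by simp
      also have "\<dots> \<le> prod_list (map c w) * (2 * R)" unfolding J_def
        using wI cpos R by (intro Sw_image_diam) auto
      finally have "diameter (U m) powr d \<le> (prod_list (map c w) * (2 * R)) powr d"
        using d by (intro powr_mono2) (auto simp: bdd diameter_ge_0)
      also have "\<dots> = prod_list (map c w) powr d * (2 * R) powr d"
        using cw R by (simp add: powr_mult)
      also have "\<dots> \<le> (prod_list (map q w) / (exp \<eta> ^ K * 2 ^ j)) * (2 * R) powr d"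
        using gw by (intro mult_right_mono) (auto simp: field_simps)
      finally show ?thesis unfolding h_def p w_def using True by (simp add: mult.commute)
    next
      case False
      then show ?thesis unfolding U_def h_def p by simp
    qed
  qed
  have partial: "(\<Sum>m<N. diameter (U m) powr d) \<le> B" for N
  proof -
    have "(\<Sum>m<N. diameter (U m) powr d) \<le> (\<Sum>m<N. h (prod_decode m))"
      by (intro sum_mono f_le)
    also have "\<dots> = (\<Sum>p\<in>prod_decode ` {..<N}. h p)"
      by (subst sum.reindex) (auto intro: inj_on_subset[OF inj_prod_decode])
    also have "\<dots> \<le> (\<Sum>p\<in>{..N} \<times> {..N}. h p)"
    proof (rule sum_mono2)
      show "prod_decode ` {..<N} \<subseteq> {..N} \<times> {..N}"
      proof
        fix p assume "p \<in> prod_decode ` {..<N}"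
        then obtain m where m: "m < N" "p = prod_decode m" by auto
        obtain a b' where ab: "prod_decode m = (a, b')" by force
        have "a \<le> m" "b' \<le> m"
          using le_prod_encode_1[of a b'] le_prod_encode_2[of b' a] ab
          by (metis prod_decode_inverse)+
        then show "p \<in> {..N} \<times> {..N}" using m ab by auto
      qed
    qed (auto simp: h_nn)
    also have "\<dots> = (\<Sum>K\<le>N. \<Sum>i\<le>N. h (K,i))"
      by (simp add: sum.cartesian_product)
    also have "\<dots> \<le> (\<Sum>K\<le>N. (2 * R) powr d / 2 ^ j * inverse (exp \<eta>) ^ K)"
    proof (rule sum_mono)
      fix K assume "K \<in> {..N}"
      have "(\<Sum>i\<le>N. h (K,i)) = (\<Sum>i\<in>{..N} \<inter> {..<length (ws K)}. h (K,i))"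
        by (rule sum.mono_neutral_right) (auto simp: h_def)
      also have "\<dots> \<le> (\<Sum>i<length (ws K). h (K,i))"
        by (rule sum_mono2) (auto simp: h_nn)
      also have "\<dots> = (\<Sum>i<length (ws K). (2 * R) powr d / (exp \<eta> ^ K * 2 ^ j) * prod_list (map q (ws K ! i)))"
        by (intro sum.cong) (auto simp: h_def)
      also have "\<dots> = (2 * R) powr d / (exp \<eta> ^ K * 2 ^ j) * (\<Sum>w\<in>G K. prod_list (map q w))"
      proof -
        have "(\<Sum>i<length (ws K). prod_list (map q (ws K ! i))) = (\<Sum>w\<in>G K. prod_list (map q w))"
          using sum.reindex_bij_betw[OF bij_betw_nth[of "ws K" "{..<length (ws K)}" "G K"], of "\<lambda>w. prod_list (map q w)"] ws[of K]
          by auto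
        then show ?thesis by (simp only: sum_distrib_left[symmetric])
      qed
      also have "\<dots> \<le> (2 * R) powr d / (exp \<eta> ^ K * 2 ^ j) * 1"
      proof (intro mult_left_mono)
        have "(\<Sum>w\<in>G K. prod_list (map q w)) \<le> (\<Sum>w\<in>words I K. prod_list (map q w))"
          using G[of K] qpos by (intro sum_mono2 finite_words fin prod_list_nonneg') (auto simp: words_def intro: less_imp_le)
        also have "\<dots> = 1" using sum_prod_words[OF fin, of q K] qsum by simp
        finally show "(\<Sum>w\<in>G K. prod_list (map q w)) \<le> 1" .
      qed simp
      also have "\<dots> = (2 * R) powr d / 2 ^ j * inverse (exp \<eta>) ^ K"
        by (simp add: field_simps power_inverse)
      finally show "(\<Sum>i\<le>N. h (K,i)) \<le> (2 * R) powr d / 2 ^ j * inverse (exp \<eta>) ^ K" .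
    qed
    also have "\<dots> = (2 * R) powr d / 2 ^ j * (\<Sum>K\<le>N. inverse (exp \<eta>) ^ K)"
      by (simp add: sum_distrib_left)
    also have "\<dots> \<le> (2 * R) powr d / 2 ^ j * (1 / (1 - inverse (exp \<eta>)))"
    proof (intro mult_left_mono)
      have lt: "norm (inverse (exp \<eta>)) < 1" using \<eta> by (simp add: inverse_less_1_iff)
      have "(\<Sum>K\<le>N. inverse (exp \<eta>) ^ K) \<le> (\<Sum>K. inverse (exp \<eta>) ^ K)"
        by (rule sum_le_suminf[OF summable_geometric[OF lt]]) auto
      also have "\<dots> = 1 / (1 - inverse (exp \<eta>))" by (rule suminf_geometric[OF lt])
      finally show "(\<Sum>K\<le>N. inverse (exp \<eta>) ^ K) \<le> 1 / (1 - inverse (exp \<eta>))" .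
    qed simp
    also have "\<dots> = B" unfolding B_def by simp
    finally show ?thesis .
  qed
  have nn: "\<And>m. 0 \<le> diameter (U m) powr d" by simp
  have summ: "summable (\<lambda>m. diameter (U m) powr d)"
    by (rule summableI_nonneg_bounded[OF nn partial])
  have "(\<Sum>m. diameter (U m) powr d) \<le> B"
    by (rule suminf_le_const[OF summ partial])
  then show ?thesis using cov bdd summ unfolding B_def J_def by blast
qed


lemma ifs_dim:
  fixes \<mu> :: "real measure" and I :: "'a set" and q c b :: "'a \<Rightarrow> real"
  assumes fin: "finite I" and ps: "prob_space \<mu>" and sets: "sets \<mu> = sets borel"
  and qpos: "\<And>i. i\<in>I \<Longrightarrow> 0 < q i" and cpos: "\<And>i. i\<in>I \<Longrightarrow> 0 < c i"
  and fp: "\<And>A. A \<in> sets borel \<Longrightarrow>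
          measure \<mu> A = (\<Sum>i\<in>I. q i * measure \<mu> ((\<lambda>x. c i * x + b i) -` A))"
  and J: "measure \<mu> {-R..R} = 1" and R: "0 \<le> R"
  and qsum: "(\<Sum>i\<in>I. q i) = 1" and d: "0 < d" and \<eta>: "0 < \<eta>"
  and \<theta>: "0 < \<theta>"
  and lam: "(\<Sum>i\<in>I. q i * (exp \<eta> * c i powr d / q i) powr \<theta>) < 1"
  shows "\<exists>E \<in> sets borel. measure \<mu> E = 1 \<and> hausdorff_outer d E = 0"
proof -
  interpret prob_space \<mu> by (rule ps)
  have sp: "space \<mu> = UNIV" using sets_eq_imp_space_eq[OF sets] by simp
  define L where "L = (\<Sum>i\<in>I. q i * (exp \<eta> * c i powr d / q i) powr \<theta>)"
  have L0: "0 \<le> L" unfolding L_def using qpos by (intro sum_nonneg mult_nonneg_nonneg) (auto intro: less_imp_le)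
  have L1: "L < 1" using lam unfolding L_def .
  define G where "G j K = {w \<in> words I K. prod_list (map c w) powr d * exp \<eta> ^ K * 2 ^ j \<le> prod_list (map q w)}" for j K
  define F where "F j = (\<Union>K. \<Union>w\<in>G j K. Sw c b w ` {-R..R})" for j
  have GGG: "G j K = {w \<in> words I K. prod_list (map c w) powr d * exp \<eta> ^ K * 2 ^ j \<le> prod_list (map q w)}" for j K
    by (simp add: G_def)
  have img_borel: "Sw c b w ` {-R..R} \<in> sets borel" for w
  proof -
    have "compact (Sw c b w ` {-R..R})"
      by (intro compact_continuous_image continuous_on_subset[OF continuous_Sw]) auto
    then show ?thesis by (intro borel_closed compact_imp_closed)
  qed
  have finG: "finite (G j K)" for j K using finite_words[OF fin] unfolding G_def by auto
  have F_borel: "F j \<in> sets borel" for j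
    unfolding F_def using finG img_borel by (intro sets.countable_UN) auto
  have Fc: "measure \<mu> (UNIV - F j) = 0" for j
  proof -
    have le: "measure \<mu> (UNIV - F j) \<le> 2 powr (real j * \<theta>) * L ^ K" for K
    proof -
      have "UNIV - F j \<subseteq> UNIV - (\<Union>w\<in>G j K. Sw c b w ` {-R..R})" unfolding F_def by auto
      then have "measure \<mu> (UNIV - F j) \<le> measure \<mu> (UNIV - (\<Union>w\<in>G j K. Sw c b w ` {-R..R}))"
      proof (rule finite_measure_mono)
        have "(\<Union>w\<in>G j K. Sw c b w ` {-R..R}) \<in> sets borel"
          using finG img_borel by (intro sets.finite_UN) auto
        then show "UNIV - (\<Union>w\<in>G j K. Sw c b w ` {-R..R}) \<in> events"
          using sets by (metis Compl_eq_Diff_UNIV borel_comp)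
      qed
      also have "\<dots> \<le> 2 powr (real j * \<theta>) * L ^ K" unfolding L_def
        by (rule ifs_full_measure[OF fin ps sets qpos cpos fp J \<theta> lam GGG])
      finally show ?thesis .
    qed
    have "(\<lambda>K. 2 powr (real j * \<theta>) * L ^ K) \<longlonglongrightarrow> 2 powr (real j * \<theta>) * 0"
      using L0 L1 by (intro tendsto_mult tendsto_const LIMSEQ_power_zero) auto
    then have "measure \<mu> (UNIV - F j) \<le> 2 powr (real j * \<theta>) * 0"
      by (rule LIMSEQ_le_const) (use le in auto)
    then show ?thesis by (simp add: antisym)
  qed
  define E where "E = (\<Inter>j. F j)"
  have E_borel: "E \<in> sets borel" unfolding E_def using F_borel by (intro sets.countable_INT) auto
  have "measure \<mu> (\<Union>j. UNIV - F j) \<le> (\<Sum>j. measure \<mu> (UNIV - F j))"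
    using F_borel sets by (intro finite_measure_subadditive_countably) (auto simp: Fc)
  then have "measure \<mu> (UNIV - E) \<le> 0" unfolding E_def by (simp add: Fc)
  then have "measure \<mu> (UNIV - E) = 0" by (simp add: antisym)
  then have mE: "measure \<mu> E = 1" using prob_compl[of E] E_borel sets sp by auto
  have "hausdorff_outer d E = 0"
  proof (rule hausdorff_outer_zeroI[OF d])
    fix \<epsilon> :: real assume \<epsilon>: "0 < \<epsilon>"
    define C where "C = (2 * R) powr d / (1 - inverse (exp \<eta>))"
    obtain j :: nat where j: "C / \<epsilon> < 2 ^ j" using real_arch_pow[of 2 "C / \<epsilon>"] by auto
    have "C / 2 ^ j < \<epsilon>" using j \<epsilon> by (simp add: field_simps)
    have "\<exists>U::nat \<Rightarrow> real set. (\<Union>K. \<Union>w\<in>G j K. Sw c b w ` {-R..R}) \<subseteq> (\<Union>i. U i) \<and> (\<forall>i. bounded (U i))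
      \<and> summable (\<lambda>i. diameter (U i) powr d)
      \<and> (\<Sum>i. diameter (U i) powr d) \<le> (2 * R) powr d / 2 ^ j / (1 - inverse (exp \<eta>))"
      by (rule ifs_cover[OF fin qpos cpos qsum R d \<eta> GGG])
    then obtain U :: "nat \<Rightarrow> real set" where U: "(\<Union>K. \<Union>w\<in>G j K. Sw c b w ` {-R..R}) \<subseteq> (\<Union>i. U i)" "\<forall>i. bounded (U i)"
       "summable (\<lambda>i. diameter (U i) powr d)"
       "(\<Sum>i. diameter (U i) powr d) \<le> (2 * R) powr d / 2 ^ j / (1 - inverse (exp \<eta>))"
      by (elim exE conjE) (rule that)
    have FU: "F j \<subseteq> (\<Union>i. U i)" unfolding F_def by (rule U(1))
    have "(2 * R) powr d / 2 ^ j / (1 - inverse (exp \<eta>)) = C / 2 ^ j" unfolding C_def by simp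
    moreover have "E \<subseteq> (\<Union>i. U i)" using FU unfolding E_def by blast
    ultimately show "\<exists>U::nat \<Rightarrow> real set. E \<subseteq> (\<Union>i. U i) \<and> (\<forall>i. bounded (U i))
      \<and> summable (\<lambda>i. diameter (U i) powr d) \<and> (\<Sum>i. diameter (U i) powr d) \<le> \<epsilon>"
      using U(2-4) \<open>C / 2 ^ j < \<epsilon>\<close> by (intro exI[of _ U]) auto
  qed
  then show ?thesis using mE E_borel by blast
qed


definition bet :: "real \<Rightarrow> real \<Rightarrow> bool \<Rightarrow> real" where
  "bet \<beta>1 \<beta>2 x = (if x then \<beta>1 else \<beta>2)"
definition sg :: "bool \<Rightarrow> real" where "sg x = (if x then 1 else -1)"
definition Tb :: "real \<Rightarrow> real \<Rightarrow> bool \<Rightarrow> real \<Rightarrow> real" where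
  "Tb \<beta>1 \<beta>2 x y = bet \<beta>1 \<beta>2 x * y + bet \<beta>1 \<beta>2 x * sg x"

lemma Tb_True: "Tb \<beta>1 \<beta>2 True = T1 \<beta>1" and Tb_False: "Tb \<beta>1 \<beta>2 False = T2 \<beta>2"
  by (auto simp: fun_eq_iff Tb_def T1_def T2_def bet_def sg_def)

definition trm :: "real \<Rightarrow> real \<Rightarrow> bool stream \<Rightarrow> nat \<Rightarrow> real" where
  "trm \<beta>1 \<beta>2 \<omega> k = (\<Prod>i\<le>k. bet \<beta>1 \<beta>2 (\<omega> !! i)) * sg (\<omega> !! k)"

definition coding :: "real \<Rightarrow> real \<Rightarrow> bool stream \<Rightarrow> real" where
  "coding \<beta>1 \<beta>2 \<omega> = (\<Sum>k. trm \<beta>1 \<beta>2 \<omega> k)"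

context
  fixes \<beta>1 \<beta>2 :: real
  assumes b1: "0 < \<beta>1" "\<beta>1 < 1" and b2: "0 < \<beta>2" "\<beta>2 < 1"
begin

definition "B = max \<beta>1 \<beta>2"

lemma B: "0 < B" "B < 1" using b1 b2 by (auto simp: B_def)

lemma bet_bound: "0 < bet \<beta>1 \<beta>2 x" "bet \<beta>1 \<beta>2 x \<le> B"
  using b1 b2 by (auto simp: bet_def B_def)

lemma trm_bound: "\<bar>trm \<beta>1 \<beta>2 \<omega> k\<bar> \<le> B ^ Suc k"
proof -
  have "\<bar>trm \<beta>1 \<beta>2 \<omega> k\<bar> = (\<Prod>i\<le>k. bet \<beta>1 \<beta>2 (\<omega> !! i))"
    using bet_bound(1) by (simp add: trm_def sg_def abs_prod abs_mult abs_of_pos)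
  also have "\<dots> \<le> (\<Prod>i\<le>k. B)"
    using bet_bound by (intro prod_mono) (auto intro: less_imp_le)
  finally show ?thesis by simp
qed

lemma summable_Bpow: "summable (\<lambda>k. B ^ Suc k)"
  using B by (simp add: summable_geometric)

lemma trm_summable: "summable (\<lambda>k. \<bar>trm \<beta>1 \<beta>2 \<omega> k\<bar>)"
  by (rule summable_comparison_test'[OF summable_Bpow, of 0]) (use trm_bound in auto)

lemma trm_summable': "summable (\<lambda>k. trm \<beta>1 \<beta>2 \<omega> k)"
  using trm_summable summable_rabs_cancel by blast

lemma coding_bound: "\<bar>coding \<beta>1 \<beta>2 \<omega>\<bar> \<le> B / (1 - B)"
proof -
  have "\<bar>coding \<beta>1 \<beta>2 \<omega>\<bar> \<le> (\<Sum>k. \<bar>trm \<beta>1 \<beta>2 \<omega> k\<bar>)"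
    unfolding coding_def using summable_norm[of "trm \<beta>1 \<beta>2 \<omega>"] trm_summable by simp
  also have "\<dots> \<le> (\<Sum>k. B ^ Suc k)"
    by (intro suminf_le trm_summable summable_Bpow trm_bound)
  also have "\<dots> = B / (1 - B)"
    using B suminf_geometric[of B] by (simp add: suminf_mult)
  finally show ?thesis .
qed

lemma trm_Cons: "trm \<beta>1 \<beta>2 (x ## \<omega>) (Suc k) = bet \<beta>1 \<beta>2 x * trm \<beta>1 \<beta>2 \<omega> k"
  unfolding trm_def by (simp only: prod.atMost_Suc_shift) simp

lemma coding_Cons: "coding \<beta>1 \<beta>2 (x ## \<omega>) = Tb \<beta>1 \<beta>2 x (coding \<beta>1 \<beta>2 \<omega>)"
proof -
  have "coding \<beta>1 \<beta>2 (x ## \<omega>) = (\<Sum>k. trm \<beta>1 \<beta>2 (x ## \<omega>) (Suc k)) + trm \<beta>1 \<beta>2 (x ## \<omega>) 0"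
    unfolding coding_def using suminf_split_head[OF trm_summable'[of "x ## \<omega>"]] by simp
  also have "\<dots> = bet \<beta>1 \<beta>2 x * coding \<beta>1 \<beta>2 \<omega> + bet \<beta>1 \<beta>2 x * sg x"
    unfolding trm_Cons coding_def using trm_summable'
    by (simp add: suminf_mult) (simp add: trm_def)
  finally show ?thesis by (simp add: Tb_def)
qed

lemma coding_measurable:
  "coding \<beta>1 \<beta>2 \<in> borel_measurable (stream_space (measure_pmf (bernoulli_pmf p)))"
proof (rule borel_measurable_LIMSEQ_real)
  fix \<omega> show "(\<lambda>n. \<Sum>k<n. trm \<beta>1 \<beta>2 \<omega> k) \<longlonglongrightarrow> coding \<beta>1 \<beta>2 \<omega>"
    unfolding coding_def using trm_summable' by (intro summable_LIMSEQ)
next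
  fix n
  show "(\<lambda>\<omega>. \<Sum>k<n. trm \<beta>1 \<beta>2 \<omega> k) \<in> borel_measurable (stream_space (measure_pmf (bernoulli_pmf p)))"
    unfolding trm_def bet_def sg_def by measurable
qed

end


lemma Tb_measurable[measurable]: "Tb \<beta>1 \<beta>2 x \<in> borel_measurable borel"
  unfolding Tb_def by measurable

lemma ssm_exists:
  fixes \<beta>1 \<beta>2 p :: real
  assumes b1: "0 < \<beta>1" "\<beta>1 < 1" and b2: "0 < \<beta>2" "\<beta>2 < 1" and p: "0 < p" "p < 1"
  defines "S \<equiv> stream_space (measure_pmf (bernoulli_pmf p))"
  defines "\<mu>0 \<equiv> distr S borel (coding \<beta>1 \<beta>2)"
  shows "sets \<mu>0 = sets borel" "prob_space \<mu>0"
    "\<forall>A \<in> sets borel. emeasure \<mu>0 A =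
          ennreal p * emeasure (distr \<mu>0 borel (T1 \<beta>1)) A
        + ennreal (1 - p) * emeasure (distr \<mu>0 borel (T2 \<beta>2)) A"
    "\<exists>R. 0 \<le> R \<and> measure \<mu>0 {-R..R} = 1"
proof -
  have psM: "prob_space (measure_pmf (bernoulli_pmf p))" by (rule prob_space_measure_pmf)
  have psS: "prob_space S" unfolding S_def by (rule prob_space.prob_space_stream_space[OF psM])
  have cm[measurable]: "coding \<beta>1 \<beta>2 \<in> borel_measurable S"
    unfolding S_def using coding_measurable[OF b1 b2] .
  show sets: "sets \<mu>0 = sets borel" unfolding \<mu>0_def by simp
  show ps: "prob_space \<mu>0" unfolding \<mu>0_def by (intro prob_space.prob_space_distr[OF psS cm])
  show "\<forall>A \<in> sets borel. emeasure \<mu>0 A =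
          ennreal p * emeasure (distr \<mu>0 borel (T1 \<beta>1)) A
        + ennreal (1 - p) * emeasure (distr \<mu>0 borel (T2 \<beta>2)) A"
  proof
    fix A :: "real set" assume A[measurable]: "A \<in> sets borel"
    have g: "(\<integral>\<^sup>+\<omega>. indicator A (Tb \<beta>1 \<beta>2 x (coding \<beta>1 \<beta>2 \<omega>)) \<partial>S) = emeasure (distr \<mu>0 borel (Tb \<beta>1 \<beta>2 x)) A" for x
    proof -
      have "emeasure (distr \<mu>0 borel (Tb \<beta>1 \<beta>2 x)) A = (\<integral>\<^sup>+y. indicator A y \<partial>distr \<mu>0 borel (Tb \<beta>1 \<beta>2 x))"
        by (rule nn_integral_indicator[symmetric]) simp
      also have "\<dots> = (\<integral>\<^sup>+y. indicator A (Tb \<beta>1 \<beta>2 x y) \<partial>\<mu>0)"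
        by (rule nn_integral_distr) (auto simp: measurable_cong_sets[OF sets refl])
      also have "\<dots> = (\<integral>\<^sup>+\<omega>. indicator A (Tb \<beta>1 \<beta>2 x (coding \<beta>1 \<beta>2 \<omega>)) \<partial>S)"
        unfolding \<mu>0_def by (rule nn_integral_distr) auto
      finally show ?thesis by simp
    qed
    have "emeasure \<mu>0 A = (\<integral>\<^sup>+y. indicator A y \<partial>\<mu>0)"
      by (rule nn_integral_indicator[symmetric]) (simp add: sets)
    also have "\<dots> = (\<integral>\<^sup>+\<omega>. indicator A (coding \<beta>1 \<beta>2 \<omega>) \<partial>S)"
      unfolding \<mu>0_def by (rule nn_integral_distr) auto
    also have "\<dots> = (\<integral>\<^sup>+x. (\<integral>\<^sup>+\<omega>. indicator A (coding \<beta>1 \<beta>2 (x ## \<omega>)) \<partial>S) \<partial>measure_pmf (bernoulli_pmf p))"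
      unfolding S_def by (rule prob_space.nn_integral_stream_space[OF psM]) (simp add: S_def[symmetric])
    also have "\<dots> = (\<integral>\<^sup>+x. emeasure (distr \<mu>0 borel (Tb \<beta>1 \<beta>2 x)) A \<partial>measure_pmf (bernoulli_pmf p))"
      by (simp add: coding_Cons[OF b1 b2] g)
    also have "\<dots> = (\<Sum>x\<in>UNIV. emeasure (distr \<mu>0 borel (Tb \<beta>1 \<beta>2 x)) A * ennreal (pmf (bernoulli_pmf p) x))"
      using p by (subst nn_integral_measure_pmf_finite) (auto simp: set_pmf_bernoulli)
    also have "\<dots> = ennreal p * emeasure (distr \<mu>0 borel (T1 \<beta>1)) A
        + ennreal (1 - p) * emeasure (distr \<mu>0 borel (T2 \<beta>2)) A"
      using p by (simp add: UNIV_bool Tb_True Tb_False mult.commute)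
    finally show "emeasure \<mu>0 A = ennreal p * emeasure (distr \<mu>0 borel (T1 \<beta>1)) A
        + ennreal (1 - p) * emeasure (distr \<mu>0 borel (T2 \<beta>2)) A" .
  qed
  show "\<exists>R. 0 \<le> R \<and> measure \<mu>0 {-R..R} = 1"
  proof (intro exI conjI)
    let ?R = "B \<beta>1 \<beta>2 / (1 - B \<beta>1 \<beta>2)"
    show "0 \<le> ?R" using B[OF b1 b2] by simp
    have "coding \<beta>1 \<beta>2 -` {-?R..?R} \<inter> space S = space S"
      using coding_bound[OF b1 b2] by (force simp: abs_le_iff)
    then show "measure \<mu>0 {-?R..?R} = 1"
      unfolding \<mu>0_def using prob_space.prob_space[OF psS]
      by (subst measure_distr) auto
  qed
qed


lemma fp_char:
  fixes \<beta>1 \<beta>2 p :: real and \<mu> :: "real measure"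
  assumes p: "0 < p" "p < 1"
  and sets: "sets \<mu> = sets borel" and ps: "prob_space \<mu>"
  and fp: "\<forall>A \<in> sets borel. emeasure \<mu> A =
          ennreal p * emeasure (distr \<mu> borel (T1 \<beta>1)) A
        + ennreal (1 - p) * emeasure (distr \<mu> borel (T2 \<beta>2)) A"
  shows "char \<mu> \<xi> = p * (iexp (\<xi> * \<beta>1) * char \<mu> (\<xi> * \<beta>1))
                 + (1 - p) * (iexp (- (\<xi> * \<beta>2)) * char \<mu> (\<xi> * \<beta>2))"
proof -
  define M where "M = measure_pmf (bernoulli_pmf p)"
  define F where "F = (\<lambda>z. Tb \<beta>1 \<beta>2 (fst z) (snd z))"
  have psM: "prob_space M" unfolding M_def by (rule prob_space_measure_pmf)
  interpret P: pair_prob_space M \<mu>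
    unfolding pair_prob_space_def pair_sigma_finite_def using psM ps by (auto intro: prob_space_imp_sigma_finite)
  have sets_eq[measurable_cong]: "sets \<mu> = sets borel" by (rule sets)
  have Fm[measurable]: "F \<in> borel_measurable (M \<Otimes>\<^sub>M \<mu>)"
    unfolding F_def Tb_def bet_def sg_def M_def by measurable
  define N where "N = distr (M \<Otimes>\<^sub>M \<mu>) borel F"
  have sf: "sigma_finite_measure \<mu>" by (rule prob_space_imp_sigma_finite[OF ps])
  have g: "(\<integral>\<^sup>+y. indicator A (Tb \<beta>1 \<beta>2 x y) \<partial>\<mu>) = emeasure (distr \<mu> borel (Tb \<beta>1 \<beta>2 x)) A"
    if A[measurable]: "A \<in> sets borel" for x A
  proof -
    have "emeasure (distr \<mu> borel (Tb \<beta>1 \<beta>2 x)) A = (\<integral>\<^sup>+y. indicator A y \<partial>distr \<mu> borel (Tb \<beta>1 \<beta>2 x))"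
      by (rule nn_integral_indicator[symmetric]) simp
    also have "\<dots> = (\<integral>\<^sup>+y. indicator A (Tb \<beta>1 \<beta>2 x y) \<partial>\<mu>)"
      by (rule nn_integral_distr) auto
    finally show ?thesis by simp
  qed
  have "\<mu> = N"
  proof (rule measure_eqI)
    show "sets \<mu> = sets N" unfolding N_def by (simp add: sets)
    fix A assume "A \<in> sets \<mu>"
    then have A[measurable]: "A \<in> sets borel" using sets by simp
    have "emeasure N A = (\<integral>\<^sup>+y. indicator A y \<partial>N)"
      by (rule nn_integral_indicator[symmetric]) (simp add: N_def)
    also have "\<dots> = (\<integral>\<^sup>+z. indicator A (F z) \<partial>(M \<Otimes>\<^sub>M \<mu>))"
      unfolding N_def by (rule nn_integral_distr) auto
    also have "\<dots> = (\<integral>\<^sup>+b. \<integral>\<^sup>+y. indicator A (F (b, y)) \<partial>\<mu> \<partial>M)"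
      by (rule sigma_finite_measure.nn_integral_fst[OF sf, symmetric]) simp
    also have "\<dots> = (\<integral>\<^sup>+b. emeasure (distr \<mu> borel (Tb \<beta>1 \<beta>2 b)) A \<partial>M)"
      by (simp add: F_def g)
    also have "\<dots> = (\<Sum>b\<in>UNIV. emeasure (distr \<mu> borel (Tb \<beta>1 \<beta>2 b)) A * ennreal (pmf (bernoulli_pmf p) b))"
      unfolding M_def using p by (subst nn_integral_measure_pmf_finite) (auto simp: set_pmf_bernoulli)
    also have "\<dots> = ennreal p * emeasure (distr \<mu> borel (T1 \<beta>1)) A
        + ennreal (1 - p) * emeasure (distr \<mu> borel (T2 \<beta>2)) A"
      using p by (simp add: UNIV_bool Tb_True Tb_False mult.commute)
    also have "\<dots> = emeasure \<mu> A" using fp A by simp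
    finally show "emeasure \<mu> A = emeasure N A" by simp
  qed
  have "char \<mu> \<xi> = (CLINT x|N. iexp (\<xi> * x))" unfolding char_def using \<open>\<mu> = N\<close> by simp
  also have "\<dots> = (CLINT z|(M \<Otimes>\<^sub>M \<mu>). iexp (\<xi> * F z))"
    unfolding N_def by (rule integral_distr) auto
  also have "\<dots> = (CLINT b|M. CLINT y|\<mu>. iexp (\<xi> * F (b, y)))"
  proof (rule P.integral_fst'[symmetric])
    show "integrable (M \<Otimes>\<^sub>M \<mu>) (\<lambda>z. iexp (\<xi> * F z))"
      by (rule prob_space.integrable_iexp[OF P.prob_space_axioms]) auto
  qed
  also have "\<dots> = (\<Sum>b\<in>UNIV. pmf (bernoulli_pmf p) b *\<^sub>R (CLINT y|\<mu>. iexp (\<xi> * F (b, y))))"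
    unfolding M_def by (rule integral_measure_pmf) auto
  also have "\<dots> = p * (CLINT y|\<mu>. iexp (\<xi> * Tb \<beta>1 \<beta>2 True y))
       + (1 - p) * (CLINT y|\<mu>. iexp (\<xi> * Tb \<beta>1 \<beta>2 False y))"
    using p by (simp add: UNIV_bool F_def scaleR_conv_of_real)
  also have "(CLINT y|\<mu>. iexp (\<xi> * Tb \<beta>1 \<beta>2 True y)) = iexp (\<xi> * \<beta>1) * char \<mu> (\<xi> * \<beta>1)"
  proof -
    have "(CLINT y|\<mu>. iexp (\<xi> * Tb \<beta>1 \<beta>2 True y)) = (CLINT y|\<mu>. iexp (\<xi> * \<beta>1) * iexp (\<xi> * \<beta>1 * y))"
      by (intro Bochner_Integration.integral_cong) (auto simp: Tb_def bet_def sg_def algebra_simps simp flip: exp_add)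
    then show ?thesis unfolding char_def by simp
  qed
  also have "(CLINT y|\<mu>. iexp (\<xi> * Tb \<beta>1 \<beta>2 False y)) = iexp (- (\<xi> * \<beta>2)) * char \<mu> (\<xi> * \<beta>2)"
  proof -
    have "(CLINT y|\<mu>. iexp (\<xi> * Tb \<beta>1 \<beta>2 False y)) = (CLINT y|\<mu>. iexp (- (\<xi> * \<beta>2)) * iexp (\<xi> * \<beta>2 * y))"
      by (intro Bochner_Integration.integral_cong) (auto simp: Tb_def bet_def sg_def algebra_simps simp flip: exp_add)
    then show ?thesis unfolding char_def by simp
  qed
  finally show ?thesis .
qed


definition is_ssm :: "real \<Rightarrow> real \<Rightarrow> real \<Rightarrow> real measure \<Rightarrow> bool" where
  "is_ssm p \<beta>1 \<beta>2 \<mu> \<longleftrightarrow> sets \<mu> = sets borel \<and> prob_space \<mu> \<and>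
      (\<forall>A \<in> sets borel. emeasure \<mu> A =
          ennreal p * emeasure (distr \<mu> borel (T1 \<beta>1)) A
        + ennreal (1 - p) * emeasure (distr \<mu> borel (T2 \<beta>2)) A)"

lemma ssm_unique:
  fixes \<beta>1 \<beta>2 p :: real
  assumes b1: "0 < \<beta>1" "\<beta>1 < 1" and b2: "0 < \<beta>2" "\<beta>2 < 1" and p: "0 < p" "p < 1"
  and m1: "is_ssm p \<beta>1 \<beta>2 \<mu>1" and m2: "is_ssm p \<beta>1 \<beta>2 \<mu>2"
  shows "\<mu>1 = \<mu>2"
proof -
  have rd1: "real_distribution \<mu>1" and rd2: "real_distribution \<mu>2"
    using m1 m2 by (auto simp: is_ssm_def real_distribution_def real_distribution_axioms_def)
  define D where "D \<xi> = char \<mu>1 \<xi> - char \<mu>2 \<xi>" for \<xi>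
  define B where "B = max \<beta>1 \<beta>2"
  have B: "0 < B" "B < 1" using b1 b2 by (auto simp: B_def)
  have rec: "norm (D \<xi>) \<le> p * norm (D (\<xi> * \<beta>1)) + (1 - p) * norm (D (\<xi> * \<beta>2))" for \<xi>
  proof -
    have "D \<xi> = p * (iexp (\<xi> * \<beta>1) * D (\<xi> * \<beta>1)) + (1 - p) * (iexp (- (\<xi> * \<beta>2)) * D (\<xi> * \<beta>2))"
      unfolding D_def using m1 m2 p
      by (simp add: fp_char[of p \<mu>1 \<beta>1 \<beta>2 \<xi>] fp_char[of p \<mu>2 \<beta>1 \<beta>2 \<xi>] is_ssm_def algebra_simps)
    also have "norm \<dots> \<le> norm (p * (iexp (\<xi> * \<beta>1) * D (\<xi> * \<beta>1))) + norm ((1 - p) * (iexp (- (\<xi> * \<beta>2)) * D (\<xi> * \<beta>2)))"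
      by (rule norm_triangle_ineq)
    also have "\<dots> = p * norm (D (\<xi> * \<beta>1)) + (1 - p) * norm (D (\<xi> * \<beta>2))"
    proof -
      have "cmod (1 - complex_of_real p) = 1 - p"
        using p by (metis abs_of_nonneg diff_ge_0_iff_ge less_imp_le norm_of_real of_real_1 of_real_diff)
      then show ?thesis using p by (simp add: norm_mult norm_exp_i_times del: of_real_mult)
    qed
    finally show ?thesis .
  qed
  have cont: "isCont D 0" unfolding D_def
    using real_distribution.isCont_char[OF rd1] real_distribution.isCont_char[OF rd2] by (intro continuous_intros)
  have D0: "D 0 = 0" unfolding D_def using real_distribution.char_zero[OF rd1] real_distribution.char_zero[OF rd2] by simp
  have small: "norm (D \<xi>) \<le> \<epsilon>" if \<epsilon>: "0 < \<epsilon>" for \<xi> \<epsilon>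
  proof -
    from cont D0 have "D \<midarrow>0\<rightarrow> 0" by (simp add: isCont_def)
    then obtain \<delta> where \<delta>: "0 < \<delta>" "\<And>x. x \<noteq> 0 \<and> norm x < \<delta> \<Longrightarrow> norm (D x) < \<epsilon>"
      using \<epsilon> unfolding LIM_eq by auto
    have claim: "\<forall>\<eta>. \<bar>\<eta>\<bar> * B ^ k < \<delta> \<longrightarrow> norm (D \<eta>) \<le> \<epsilon>" for k
    proof (induction k)
      case 0
      show ?case
      proof (intro allI impI)
        fix \<eta> :: real assume "\<bar>\<eta>\<bar> * B ^ 0 < \<delta>"
        then show "norm (D \<eta>) \<le> \<epsilon>" using \<delta>(2)[of \<eta>] D0 \<epsilon> by (cases "\<eta> = 0") auto
      qed
    next
      case (Suc k)
      show ?case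
      proof (intro allI impI)
        fix \<eta> :: real assume h: "\<bar>\<eta>\<bar> * B ^ Suc k < \<delta>"
        have "\<bar>\<eta> * \<beta>1\<bar> * B ^ k \<le> \<bar>\<eta>\<bar> * B ^ Suc k"
        proof -
          have "\<bar>\<eta> * \<beta>1\<bar> * B ^ k = (\<bar>\<eta>\<bar> * B ^ k) * \<beta>1" using b1 by (simp add: abs_mult)
          also have "\<dots> \<le> (\<bar>\<eta>\<bar> * B ^ k) * B" using B by (intro mult_left_mono) (auto simp: B_def)
          finally show ?thesis by (simp add: algebra_simps)
        qed
        then have 1: "norm (D (\<eta> * \<beta>1)) \<le> \<epsilon>" using Suc h by auto
        have "\<bar>\<eta> * \<beta>2\<bar> * B ^ k \<le> \<bar>\<eta>\<bar> * B ^ Suc k"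
        proof -
          have "\<bar>\<eta> * \<beta>2\<bar> * B ^ k = (\<bar>\<eta>\<bar> * B ^ k) * \<beta>2" using b2 by (simp add: abs_mult)
          also have "\<dots> \<le> (\<bar>\<eta>\<bar> * B ^ k) * B" using B by (intro mult_left_mono) (auto simp: B_def)
          finally show ?thesis by (simp add: algebra_simps)
        qed
        then have 2: "norm (D (\<eta> * \<beta>2)) \<le> \<epsilon>" using Suc h by auto
        have "norm (D \<eta>) \<le> p * norm (D (\<eta> * \<beta>1)) + (1 - p) * norm (D (\<eta> * \<beta>2))" by (rule rec)
        also have "\<dots> \<le> p * \<epsilon> + (1 - p) * \<epsilon>"
          using 1 2 p by (intro add_mono mult_left_mono) auto
        finally show "norm (D \<eta>) \<le> \<epsilon>" by (simp add: algebra_simps)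
      qed
    qed
    obtain k where k: "B ^ k < \<delta> / (\<bar>\<xi>\<bar> + 1)"
      using real_arch_pow_inv[of "\<delta> / (\<bar>\<xi>\<bar> + 1)" B] B \<delta> by auto
    have "\<bar>\<xi>\<bar> * B ^ k \<le> (\<bar>\<xi>\<bar> + 1) * B ^ k" using B by (intro mult_right_mono) auto
    also have "\<dots> < \<delta>" using k by (simp add: field_simps add_pos_nonneg)
    finally show ?thesis using claim by auto
  qed
  have "D \<xi> = 0" for \<xi>
  proof (rule ccontr)
    assume "D \<xi> \<noteq> 0"
    then have "0 < norm (D \<xi>) / 2" by simp
    from small[OF this, of \<xi>] show False using \<open>D \<xi> \<noteq> 0\<close> by simp
  qed
  then have "char \<mu>1 = char \<mu>2" unfolding D_def by (auto simp: fun_eq_iff)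
  then show ?thesis by (rule Levy_uniqueness[OF rd1 rd2])
qed

lemma ssm_eq:
  fixes \<beta>1 \<beta>2 p :: real
  assumes b1: "0 < \<beta>1" "\<beta>1 < 1" and b2: "0 < \<beta>2" "\<beta>2 < 1" and p: "0 < p" "p < 1"
  shows "is_ssm p \<beta>1 \<beta>2 (ssm p \<beta>1 \<beta>2)" "\<exists>R. 0 \<le> R \<and> measure (ssm p \<beta>1 \<beta>2) {-R..R} = 1"
proof -
  define \<mu>0 where "\<mu>0 = distr (stream_space (measure_pmf (bernoulli_pmf p))) borel (coding \<beta>1 \<beta>2)"
  note E = ssm_exists[OF b1 b2 p, folded \<mu>0_def]
  have i0: "is_ssm p \<beta>1 \<beta>2 \<mu>0" using E(1-3) by (simp add: is_ssm_def)
  have "ssm p \<beta>1 \<beta>2 = \<mu>0"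
    unfolding ssm_def
    apply (rule the_equality)
    using i0 apply (simp add: is_ssm_def)
    using ssm_unique[OF b1 b2 p _ i0] by (simp add: is_ssm_def)
  then show "is_ssm p \<beta>1 \<beta>2 (ssm p \<beta>1 \<beta>2)" "\<exists>R. 0 \<le> R \<and> measure (ssm p \<beta>1 \<beta>2) {-R..R} = 1"
    using i0 E(4) by auto
qed


definition cc :: "real \<Rightarrow> real \<Rightarrow> int \<Rightarrow> real" where "cc \<beta>1 \<beta>2 a = (if a = 1 then \<beta>1 else \<beta>2)"
definition bb :: "real \<Rightarrow> real \<Rightarrow> int \<Rightarrow> real" where "bb \<beta>1 \<beta>2 a = (if a = 1 then \<beta>1 else - \<beta>2)"
definition qq :: "real \<Rightarrow> int \<Rightarrow> real" where "qq p a = (if a = 1 then p else 1 - p)"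
definition off :: "real \<Rightarrow> real \<Rightarrow> int list \<Rightarrow> real" where
  "off \<beta>1 \<beta>2 r = (\<Sum>k = 1..length r. real_of_int (r ! (k - 1)) * \<beta>1 ^ nplus k r * \<beta>2 ^ nminus k r)"

lemma sign_seqs_words: "sign_seqs n = words {1, -1} n"
  by (auto simp: sign_seqs_def words_def)

lemma nplus_0[simp]: "nplus 0 r = 0" by (simp add: nplus_def)
lemma nplus_Cons: "nplus (Suc k) (a # r) = (if a = 1 then 1 else 0) + nplus k r"
  by (simp add: nplus_def)
lemma nplus_le: "nplus k r \<le> k"
  unfolding nplus_def by (metis length_filter_le length_take min.bounded_iff order.trans order_refl)
lemma nminus_Cons: "nminus (Suc k) (a # r) = (if a = 1 then 0 else 1) + nminus k r"
  using nplus_le[of k r] by (simp add: nminus_def nplus_Cons)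

lemma nminus_0[simp]: "nminus 0 r = 0" by (simp add: nminus_def)

lemma prod_cc: "prod_list (map (cc \<beta>1 \<beta>2) r) = rho (length r) \<beta>1 \<beta>2 r"
  by (induction r) (auto simp: rho_def cc_def nplus_Cons nminus_Cons)

lemma prod_qq: "prod_list (map (qq p) r) = wt (length r) p r"
  by (induction r) (auto simp: wt_def qq_def nplus_Cons nminus_Cons)

lemma Sw_affine:
  assumes "set r \<subseteq> {1, -1}"
  shows "Sw (cc \<beta>1 \<beta>2) (bb \<beta>1 \<beta>2) r x = rho (length r) \<beta>1 \<beta>2 r * x + off \<beta>1 \<beta>2 r"
  using assms
proof (induction r)
  case Nil then show ?case by (simp add: rho_def off_def)
next
  case (Cons a r)
  have a: "a = 1 \<or> a = -1" using Cons.prems by auto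
  have "off \<beta>1 \<beta>2 (a # r) = (\<Sum>k = 0..length r. real_of_int ((a#r) ! k) * \<beta>1 ^ nplus (Suc k) (a#r) * \<beta>2 ^ nminus (Suc k) (a#r))"
    unfolding off_def by (rule sum.reindex_bij_witness[of _ Suc "\<lambda>k. k - 1"]) auto
  also have "\<dots> = real_of_int a * \<beta>1 ^ nplus 1 (a#r) * \<beta>2 ^ nminus 1 (a#r)
     + (\<Sum>k = Suc 0..length r. real_of_int ((a#r) ! k) * \<beta>1 ^ nplus (Suc k) (a#r) * \<beta>2 ^ nminus (Suc k) (a#r))"
    by (simp add: sum.atLeast_Suc_atMost)
  also have "(\<Sum>k = Suc 0..length r. real_of_int ((a#r) ! k) * \<beta>1 ^ nplus (Suc k) (a#r) * \<beta>2 ^ nminus (Suc k) (a#r))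
      = (\<Sum>k = Suc 0..length r. cc \<beta>1 \<beta>2 a * (real_of_int (r ! (k - 1)) * \<beta>1 ^ nplus k r * \<beta>2 ^ nminus k r))"
  proof (rule sum.cong[OF refl])
    fix k assume "k \<in> {Suc 0..length r}"
    then obtain k' where k': "k = Suc k'" by (cases k) auto
    show "real_of_int ((a#r) ! k) * \<beta>1 ^ nplus (Suc k) (a#r) * \<beta>2 ^ nminus (Suc k) (a#r)
      = cc \<beta>1 \<beta>2 a * (real_of_int (r ! (k - 1)) * \<beta>1 ^ nplus k r * \<beta>2 ^ nminus k r)"
      unfolding nplus_Cons nminus_Cons k' using a by (auto simp: cc_def)
  qed
  also have "\<dots> = cc \<beta>1 \<beta>2 a * off \<beta>1 \<beta>2 r" unfolding off_def by (simp add: sum_distrib_left)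
  finally have off: "off \<beta>1 \<beta>2 (a # r) = real_of_int a * \<beta>1 ^ nplus 1 (a#r) * \<beta>2 ^ nminus 1 (a#r) + cc \<beta>1 \<beta>2 a * off \<beta>1 \<beta>2 r" .
  have "real_of_int a * \<beta>1 ^ nplus 1 (a#r) * \<beta>2 ^ nminus 1 (a#r) = bb \<beta>1 \<beta>2 a"
    using a by (auto simp: bb_def nplus_def nminus_def)
  moreover have "rho (length (a#r)) \<beta>1 \<beta>2 (a#r) = cc \<beta>1 \<beta>2 a * rho (length r) \<beta>1 \<beta>2 r"
    using prod_cc[of \<beta>1 \<beta>2 "a#r"] prod_cc[of \<beta>1 \<beta>2 r] by simp
  ultimately show ?case using Cons by (simp add: off algebra_simps)
qed


lemma ssm_fp_measure:
  fixes \<mu> :: "real measure"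
  assumes ssm: "is_ssm p \<beta>1 \<beta>2 \<mu>" and p: "0 < p" "p < 1" and A: "A \<in> sets borel"
  shows "measure \<mu> A = (\<Sum>a\<in>{1,-1}. qq p a * measure \<mu> ((\<lambda>x. cc \<beta>1 \<beta>2 a * x + bb \<beta>1 \<beta>2 a) -` A))"
proof -
  have sets: "sets \<mu> = sets borel" and ps: "prob_space \<mu>" and
    fp: "emeasure \<mu> A = ennreal p * emeasure (distr \<mu> borel (T1 \<beta>1)) A
        + ennreal (1 - p) * emeasure (distr \<mu> borel (T2 \<beta>2)) A"
    using ssm A by (auto simp: is_ssm_def)
  interpret prob_space \<mu> by (rule ps)
  have sp: "space \<mu> = UNIV" using sets_eq_imp_space_eq[OF sets] by simp
  have [measurable_cong]: "sets \<mu> = sets borel" by (rule sets)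
  have m1: "T1 \<beta>1 \<in> measurable \<mu> borel" unfolding T1_def by measurable
  have m2: "T2 \<beta>2 \<in> measurable \<mu> borel" unfolding T2_def by measurable
  have T1eq: "T1 \<beta>1 = (\<lambda>x. cc \<beta>1 \<beta>2 1 * x + bb \<beta>1 \<beta>2 1)" by (auto simp: T1_def cc_def bb_def fun_eq_iff)
  have T2eq: "T2 \<beta>2 = (\<lambda>x. cc \<beta>1 \<beta>2 (-1) * x + bb \<beta>1 \<beta>2 (-1))" by (auto simp: T2_def cc_def bb_def fun_eq_iff)
  have A1: "T1 \<beta>1 -` A \<in> events" using measurable_sets[OF m1 A] sp by simp
  have A2: "T2 \<beta>2 -` A \<in> events" using measurable_sets[OF m2 A] sp by simp
  have "ennreal (measure \<mu> A) = ennreal p * ennreal (measure \<mu> (T1 \<beta>1 -` A)) + ennreal (1 - p) * ennreal (measure \<mu> (T2 \<beta>2 -` A))"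
    using fp A sets by (simp add: emeasure_distr[OF m1] emeasure_distr[OF m2] sp emeasure_eq_measure)
  also have "\<dots> = ennreal (p * measure \<mu> (T1 \<beta>1 -` A) + (1 - p) * measure \<mu> (T2 \<beta>2 -` A))"
    using p by (simp add: ennreal_mult ennreal_plus)
  finally have "measure \<mu> A = p * measure \<mu> (T1 \<beta>1 -` A) + (1 - p) * measure \<mu> (T2 \<beta>2 -` A)"
    using p by (subst (asm) ennreal_inj) auto
  then show ?thesis by (simp add: qq_def T1eq T2eq)
qed

lemma ssm_nstep:
  fixes \<mu> :: "real measure"
  assumes ssm: "is_ssm p \<beta>1 \<beta>2 \<mu>" and p: "0 < p" "p < 1" and A: "A \<in> sets borel"
  shows "measure \<mu> A = (\<Sum>r\<in>sign_seqs n. wt n p r * measure \<mu> ((\<lambda>x. rho n \<beta>1 \<beta>2 r * x + off \<beta>1 \<beta>2 r) -` A))"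
proof -
  have sets: "sets \<mu> = sets borel" using ssm by (simp add: is_ssm_def)
  have "measure \<mu> A = (\<Sum>w\<in>words {1::int,-1} n. prod_list (map (qq p) w) * measure \<mu> (Sw (cc \<beta>1 \<beta>2) (bb \<beta>1 \<beta>2) w -` A))"
    by (rule iterate_measure[OF _ sets ssm_fp_measure[OF ssm p] A]) auto
  also have "\<dots> = (\<Sum>r\<in>sign_seqs n. wt n p r * measure \<mu> ((\<lambda>x. rho n \<beta>1 \<beta>2 r * x + off \<beta>1 \<beta>2 r) -` A))"
    unfolding sign_seqs_words
  proof (rule sum.cong[OF refl])
    fix w assume "w \<in> words {1::int, -1} n"
    then have w: "set w \<subseteq> {1,-1}" "length w = n" by (auto simp: words_def)
    show "prod_list (map (qq p) w) * measure \<mu> (Sw (cc \<beta>1 \<beta>2) (bb \<beta>1 \<beta>2) w -` A) =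
        wt n p w * measure \<mu> ((\<lambda>x. rho n \<beta>1 \<beta>2 w * x + off \<beta>1 \<beta>2 w) -` A)"
    proof -
      have e: "Sw (cc \<beta>1 \<beta>2) (bb \<beta>1 \<beta>2) w = (\<lambda>x. rho n \<beta>1 \<beta>2 w * x + off \<beta>1 \<beta>2 w)"
        using Sw_affine[OF w(1)] w(2) by auto
      show ?thesis using w by (simp add: prod_qq e)
    qed
  qed
  finally show ?thesis .
qed

lemma wt_sum: "(\<Sum>r\<in>sign_seqs n. wt n p r) = 1"
proof -
  have "(\<Sum>r\<in>sign_seqs n. wt n p r) = (\<Sum>w\<in>words {1::int,-1} n. prod_list (map (qq p) w))"
    unfolding sign_seqs_words by (intro sum.cong) (auto simp: prod_qq words_def)
  also have "\<dots> = (\<Sum>a\<in>{1,-1}. qq p a) ^ n" by (rule sum_prod_words) auto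
  also have "\<dots> = 1" by (simp add: qq_def)
  finally show ?thesis .
qed

lemma finite_sign_seqs: "finite (sign_seqs n)"
  unfolding sign_seqs_words by (rule finite_words) auto

lemma wt_pos: "0 < p \<Longrightarrow> p < 1 \<Longrightarrow> 0 < wt n p r"
  by (simp add: wt_def)

lemma rho_pos: "0 < \<beta>1 \<Longrightarrow> 0 < \<beta>2 \<Longrightarrow> 0 < rho n \<beta>1 \<beta>2 r"
  by (simp add: rho_def)

lemma prod_list_lt1: "xs \<noteq> [] \<Longrightarrow> (\<And>x. x \<in> set xs \<Longrightarrow> 0 < x \<and> x < (1::real)) \<Longrightarrow> prod_list xs < 1"
proof (induction xs)
  case Nil then show ?case by simp
next
  case (Cons a xs)
  show ?case
  proof (cases "xs = []")
    case True then show ?thesis using Cons by simp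
  next
    case False
    then have "prod_list xs < 1" using Cons by auto
    moreover have "0 < a" "a < 1" using Cons by auto
    ultimately have "a * prod_list xs \<le> a * 1" by (intro mult_left_mono) auto
    then show ?thesis using \<open>a < 1\<close> by simp
  qed
qed

lemma rho_lt1:
  assumes "0 < \<beta>1" "\<beta>1 < 1" "0 < \<beta>2" "\<beta>2 < 1" "r \<in> sign_seqs n" "n \<ge> 1"
  shows "rho n \<beta>1 \<beta>2 r < 1"
proof -
  have len: "length r = n" using assms by (simp add: sign_seqs_def)
  have "rho n \<beta>1 \<beta>2 r = prod_list (map (cc \<beta>1 \<beta>2) r)" using prod_cc[of \<beta>1 \<beta>2 r] len by simp
  also have "\<dots> < 1" using assms len by (intro prod_list_lt1) (auto simp: cc_def)
  finally show ?thesis .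
qed


lemma dim_le:
  fixes \<mu> :: "real measure"
  assumes "E \<in> sets borel" "measure \<mu> E = 1" "hausdorff_outer d E = 0" "0 < d"
  shows "hausdorff_dim_measure \<mu> \<le> d"
proof -
  have "hausdorff_dim E \<le> d" unfolding hausdorff_dim_def
    using assms by (intro cInf_lower) (auto intro: bdd_belowI[of _ 0])
  moreover have "hausdorff_dim_measure \<mu> \<le> hausdorff_dim E" unfolding hausdorff_dim_measure_def
  proof (rule cInf_lower)
    show "hausdorff_dim E \<in> {hausdorff_dim A |A. A \<in> sets borel \<and> measure \<mu> A = 1}" using assms by auto
    show "bdd_below {hausdorff_dim A |A. A \<in> sets borel \<and> measure \<mu> A = 1}"
    proof (rule bdd_belowI[of _ "min 0 (Inf ({}::real set))"])
      fix x assume "x \<in> {hausdorff_dim A |A. A \<in> sets borel \<and> measure \<mu> A = 1}"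
      then obtain A where x: "x = hausdorff_dim A" by auto
      show "min 0 (Inf ({}::real set)) \<le> x"
      proof (cases "{d. 0 < d \<and> hausdorff_outer d A = 0} = {}")
        case True
        have "x = Inf ({}::real set)" unfolding x hausdorff_dim_def by (simp only: True)
        then show ?thesis by simp
      next
        case False
        then have "0 \<le> Inf {d. 0 < d \<and> hausdorff_outer d A = 0}"
          by (intro cInf_greatest) auto
        then show ?thesis unfolding x hausdorff_dim_def by simp
      qed
    qed
  qed
  ultimately show ?thesis by simp
qed

lemma dim_bound:
  fixes n :: nat and s t :: "int list" and \<beta>1 \<beta>2 p :: real
  assumes n: "n \<ge> 1"
    and s: "s \<in> sign_seqs n" and t: "t \<in> sign_seqs n" and st: "s \<noteq> t"
    and np: "nplus n s = nplus n t"
    and b1: "0 < \<beta>1" "\<beta>1 < 1" and b2: "0 < \<beta>2" "\<beta>2 < 1"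
    and hyp: "(\<Sum>k = 1..n. real_of_int (s ! (k - 1)) * \<beta>1 ^ nplus k s * \<beta>2 ^ nminus k s
                     - real_of_int (t ! (k - 1)) * \<beta>1 ^ nplus k t * \<beta>2 ^ nminus k t) = 0"
    and p: "0 < p" "p < 1"
  shows "hausdorff_dim_measure (ssm p \<beta>1 \<beta>2) \<le> SDhat n s t p \<beta>1 \<beta>2"
proof -
  define \<mu> where "\<mu> = ssm p \<beta>1 \<beta>2"
  have ssm: "is_ssm p \<beta>1 \<beta>2 \<mu>" unfolding \<mu>_def by (rule ssm_eq[OF b1 b2 p])
  obtain R where R: "0 \<le> R" "measure \<mu> {-R..R} = 1" using ssm_eq[OF b1 b2 p] unfolding \<mu>_def by blast
  have sets: "sets \<mu> = sets borel" and ps: "prob_space \<mu>" using ssm by (auto simp: is_ssm_def)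
  define SS where "SS = sign_seqs n"
  define I where "I = SS - {t}"
  define Oo where "Oo = SS - {s, t}"
  define w where "w r = wt n p r" for r
  define c where "c r = rho n \<beta>1 \<beta>2 r" for r
  define b where "b r = off \<beta>1 \<beta>2 r" for r
  define q where "q r = (if r = s then w s + w t else w r)" for r
  have finSS: "finite SS" unfolding SS_def by (rule finite_sign_seqs)
  have finI: "finite I" "finite Oo" using finSS unfolding I_def Oo_def by auto
  have sI: "s \<in> I" using s st unfolding I_def SS_def by auto
  have I_eq: "I = insert s Oo" "s \<notin> Oo" using sI unfolding I_def Oo_def by auto
  have SS_eq: "SS = insert t I" "t \<notin> I" using t unfolding I_def SS_def by auto
  have sumI: "(\<Sum>r\<in>I. g r) = g s + (\<Sum>r\<in>Oo. g r)" for g :: "int list \<Rightarrow> real"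
    using I_eq finI by simp
  have sumSS: "(\<Sum>r\<in>SS. g r) = g t + (\<Sum>r\<in>I. g r)" for g :: "int list \<Rightarrow> real"
    using SS_eq finI by simp
  have qO: "r \<in> Oo \<Longrightarrow> q r = w r" for r unfolding q_def Oo_def by auto
  have wpos: "0 < w r" for r unfolding w_def using p by (rule wt_pos)
  have qpos: "0 < q r" for r unfolding q_def using wpos by (simp add: add_pos_pos)
  have cpos: "0 < c r" for r unfolding c_def using b1 b2 by (intro rho_pos) auto
  have clt1: "r \<in> I \<Longrightarrow> c r < 1" for r unfolding c_def I_def SS_def using b1 b2 n by (intro rho_lt1) auto
  have rho_eq: "c t = c s" unfolding c_def rho_def nminus_def using np by simp
  have off_eq: "b t = b s"
  proof -
    have "length s = n" "length t = n" using s t by (auto simp: sign_seqs_def)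
    then show ?thesis using hyp unfolding b_def off_def by (simp add: sum_subtractf)
  qed
  have qsum: "(\<Sum>r\<in>I. q r) = 1"
  proof -
    have "(\<Sum>r\<in>I. q r) = (w s + w t) + (\<Sum>r\<in>Oo. w r)" using sumI qO by (simp add: q_def)
    also have "\<dots> = (\<Sum>r\<in>SS. w r)" using sumSS sumI by simp
    also have "\<dots> = 1" unfolding SS_def w_def by (rule wt_sum)
    finally show ?thesis .
  qed
  have fp: "measure \<mu> A = (\<Sum>r\<in>I. q r * measure \<mu> ((\<lambda>x. c r * x + b r) -` A))" if A: "A \<in> sets borel" for A
  proof -
    define g where "g r = measure \<mu> ((\<lambda>x. c r * x + b r) -` A)" for r
    have "measure \<mu> A = (\<Sum>r\<in>SS. w r * g r)" unfolding SS_def w_def g_def c_def b_def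
      by (rule ssm_nstep[OF ssm p A])
    also have "\<dots> = w t * g s + w s * g s + (\<Sum>r\<in>Oo. w r * g r)"
      using sumSS sumI rho_eq off_eq by (simp add: g_def)
    also have "\<dots> = (\<Sum>r\<in>I. q r * g r)" using sumI qO by (simp add: q_def algebra_simps)
    finally show ?thesis unfolding g_def .
  qed
  define H where "H = - (\<Sum>r\<in>I. q r * ln (q r))"
  define chi where "chi = - (\<Sum>r\<in>I. q r * ln (c r))"
  have SDhat_eq: "SDhat n s t p \<beta>1 \<beta>2 = H / chi"
  proof -
    have "H = - (\<Sum>r\<in>Oo. w r * ln (w r)) - (w s + w t) * ln (w s + w t)"
      unfolding H_def using sumI[of "\<lambda>r. q r * ln (q r)"] qO by (simp add: q_def)
    moreover have "chi = - (\<Sum>r\<in>Oo. w r * ln (c r)) - (w s + w t) * ln (c s)"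
      unfolding chi_def using sumI[of "\<lambda>r. q r * ln (c r)"] qO by (simp add: q_def)
    ultimately show ?thesis unfolding SDhat_def Oo_def SS_def w_def c_def by simp
  qed
  have qle1: "r \<in> I \<Longrightarrow> q r \<le> 1" for r
    using member_le_sum[of r I q] finI qpos qsum by (simp add: less_imp_le)
  have H0: "0 \<le> H" unfolding H_def
  proof -
    have "(\<Sum>r\<in>I. q r * ln (q r)) \<le> 0"
      using qpos qle1 by (intro sum_nonpos) (simp add: mult_nonneg_nonpos less_imp_le)
    then show "0 \<le> - (\<Sum>r\<in>I. q r * ln (q r))" by simp
  qed
  have chi0: "0 < chi" unfolding chi_def
  proof -
    have "0 < (\<Sum>r\<in>I. - (q r * ln (c r)))"
      using sI finI qpos cpos clt1 by (intro sum_pos2[of I s]) (auto simp: mult_pos_neg less_imp_le mult_nonneg_nonpos)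
    then show "0 < - (\<Sum>r\<in>I. q r * ln (c r))" by (simp add: sum_negf)
  qed
  have "hausdorff_dim_measure \<mu> \<le> d" if d: "SDhat n s t p \<beta>1 \<beta>2 < d" for d
  proof -
    have SD0: "0 \<le> SDhat n s t p \<beta>1 \<beta>2" unfolding SDhat_eq using H0 chi0 by simp
    have d0: "0 < d" using d SD0 by simp
    have "H < d * chi" using d chi0 unfolding SDhat_eq by (simp add: field_simps)
    define \<eta> where "\<eta> = (d * chi - H) / 2"
    have \<eta>: "0 < \<eta>" unfolding \<eta>_def using \<open>H < d * chi\<close> by simp
    define L where "L r = \<eta> + d * ln (c r) - ln (q r)" for r
    define f where "f \<theta> = (\<Sum>r\<in>I. q r * exp (\<theta> * L r))" for \<theta>
    have "(\<Sum>r\<in>I. q r * L r) = \<eta> * (\<Sum>r\<in>I. q r) - d * chi + H"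
      unfolding L_def H_def chi_def by (simp add: algebra_simps sum.distrib sum_subtractf sum_distrib_left)
    also have "\<dots> = - \<eta>" unfolding qsum \<eta>_def by (simp add: field_simps)
    finally have dL: "(\<Sum>r\<in>I. q r * L r) < 0" using \<eta> by simp
    have "(f has_real_derivative (\<Sum>r\<in>I. q r * L r)) (at 0)"
      unfolding f_def by (auto intro!: derivative_eq_intros simp: mult.commute)
    from DERIV_neg_dec_right[OF this dL] obtain \<delta> where \<delta>: "0 < \<delta>" "\<And>h. 0 < h \<Longrightarrow> h < \<delta> \<Longrightarrow> f (0 + h) < f 0"
      by blast
    define \<theta> where "\<theta> = \<delta> / 2"
    have \<theta>: "0 < \<theta>" "\<theta> < \<delta>" using \<delta> by (auto simp: \<theta>_def)
    have f0: "f 0 = 1" unfolding f_def using qsum by simp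
    have "f \<theta> < 1" using \<delta>(2)[OF \<theta>] f0 by simp
    moreover have "(\<Sum>r\<in>I. q r * (exp \<eta> * c r powr d / q r) powr \<theta>) = f \<theta>"
      unfolding f_def
    proof (rule sum.cong[OF refl])
      fix r assume "r \<in> I"
      have pos: "0 < exp \<eta> * c r powr d / q r" using cpos[of r] qpos[of r] by simp
      have "ln (exp \<eta> * c r powr d / q r) = L r"
        unfolding L_def using cpos[of r] qpos[of r] by (simp add: ln_div ln_mult ln_powr)
      moreover have "(exp \<eta> * c r powr d / q r) powr \<theta> = exp (\<theta> * ln (exp \<eta> * c r powr d / q r))"
        unfolding powr_def[of "exp \<eta> * c r powr d / q r" \<theta>] using pos cpos[of r] qpos[of r] by simp
      ultimately show "q r * (exp \<eta> * c r powr d / q r) powr \<theta> = q r * exp (\<theta> * L r)"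
        by simp
    qed
    ultimately have lam: "(\<Sum>r\<in>I. q r * (exp \<eta> * c r powr d / q r) powr \<theta>) < 1" by simp
    obtain E where E: "E \<in> sets borel" "measure \<mu> E = 1" "hausdorff_outer d E = 0"
      using ifs_dim[OF finI(1) ps sets qpos cpos fp R(2) R(1) qsum d0 \<eta> \<theta>(1) lam] by blast
    show ?thesis by (rule dim_le[OF E d0])
  qed
  then show ?thesis unfolding \<mu>_def by (rule dense_ge)
qed


lemma sum_prod_sumlist_words:
  fixes q g :: "'a \<Rightarrow> real"
  assumes fin: "finite I" and qs: "(\<Sum>i\<in>I. q i) = 1"
  shows "(\<Sum>w\<in>words I K. prod_list (map q w) * sum_list (map g w)) = K * (\<Sum>i\<in>I. q i * g i)"
proof (induction K)
  case 0 then show ?case by (simp add: words_0)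
next
  case (Suc K)
  have inj: "inj_on (\<lambda>(i,w). i#w) (I \<times> words I K)" by (auto simp: inj_on_def)
  have Q: "(\<Sum>w\<in>words I K. prod_list (map q w)) = 1" using sum_prod_words[OF fin, of q K] qs by simp
  have "(\<Sum>w\<in>words I (Suc K). prod_list (map q w) * sum_list (map g w))
      = (\<Sum>(i,w)\<in>I \<times> words I K. q i * prod_list (map q w) * (g i + sum_list (map g w)))"
    unfolding words_Suc by (subst sum.reindex[OF inj]) (simp add: case_prod_unfold)
  also have "\<dots> = (\<Sum>i\<in>I. \<Sum>w\<in>words I K. q i * g i * prod_list (map q w) + q i * (prod_list (map q w) * sum_list (map g w)))"
    by (simp add: sum.cartesian_product algebra_simps)
  also have "\<dots> = (\<Sum>i\<in>I. q i * g i * (\<Sum>w\<in>words I K. prod_list (map q w)) + q i * (\<Sum>w\<in>words I K. prod_list (map q w) * sum_list (map g w)))"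
    by (simp add: sum.distrib sum_distrib_left)
  also have "\<dots> = (\<Sum>i\<in>I. q i * g i) + K * (\<Sum>i\<in>I. q i * g i)"
    unfolding Q Suc by (simp add: sum.distrib sum_distrib_right[symmetric] qs)
  finally show ?case by (simp add: algebra_simps)
qed

lemma ln_prod_list: fixes f :: "'a \<Rightarrow> real" shows "(\<And>x. x \<in> set xs \<Longrightarrow> 0 < f x) \<Longrightarrow> ln (prod_list (map f xs)) = sum_list (map (\<lambda>x. ln (f x)) xs)"
proof (induction xs)
  case Nil then show ?case by simp
next
  case (Cons a xs)
  have "0 < prod_list (map f xs)" using Cons.prems by (intro prod_list_pos) auto
  moreover have "0 < f a" using Cons.prems by auto
  ultimately have "ln (prod_list (map f (a#xs))) = ln (f a) + ln (prod_list (map f xs))"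
    by (simp add: ln_mult)
  also have "ln (prod_list (map f xs)) = sum_list (map (\<lambda>x. ln (f x)) xs)"
    using Cons.IH Cons.prems by auto
  finally show ?case by simp
qed

lemma entropy_sum:
  assumes p: "0 < p" "p < 1"
  shows "(\<Sum>r\<in>sign_seqs n. wt n p r * ln (wt n p r)) = n * (p * ln p + (1 - p) * ln (1 - p))"
proof -
  have "(\<Sum>r\<in>sign_seqs n. wt n p r * ln (wt n p r))
      = (\<Sum>w\<in>words {1::int,-1} n. prod_list (map (qq p) w) * sum_list (map (\<lambda>a. ln (qq p a)) w))"
    unfolding sign_seqs_words
  proof (rule sum.cong[OF refl])
    fix w assume "w \<in> words {1::int, -1} n"
    then have w: "length w = n" by (auto simp: words_def)
    have "ln (prod_list (map (qq p) w)) = sum_list (map (\<lambda>a. ln (qq p a)) w)"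
      using p by (intro ln_prod_list) (auto simp: qq_def)
    then show "wt n p w * ln (wt n p w) = prod_list (map (qq p) w) * sum_list (map (\<lambda>a. ln (qq p a)) w)"
      using w prod_qq[of p w] by simp
  qed
  also have "\<dots> = n * (\<Sum>a\<in>{1::int,-1}. qq p a * ln (qq p a))"
    by (rule sum_prod_sumlist_words) (auto simp: qq_def)
  finally show ?thesis by (simp add: qq_def)
qed

lemma lyap_sum:
  assumes p: "0 < p" "p < 1" and b: "0 < \<beta>1" "0 < \<beta>2"
  shows "(\<Sum>r\<in>sign_seqs n. wt n p r * ln (rho n \<beta>1 \<beta>2 r)) = n * (p * ln \<beta>1 + (1 - p) * ln \<beta>2)"
proof -
  have "(\<Sum>r\<in>sign_seqs n. wt n p r * ln (rho n \<beta>1 \<beta>2 r))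
      = (\<Sum>w\<in>words {1::int,-1} n. prod_list (map (qq p) w) * sum_list (map (\<lambda>a. ln (cc \<beta>1 \<beta>2 a)) w))"
    unfolding sign_seqs_words
  proof (rule sum.cong[OF refl])
    fix w assume "w \<in> words {1::int, -1} n"
    then have w: "length w = n" by (auto simp: words_def)
    have "ln (prod_list (map (cc \<beta>1 \<beta>2) w)) = sum_list (map (\<lambda>a. ln (cc \<beta>1 \<beta>2 a)) w)"
      using b by (intro ln_prod_list) (auto simp: cc_def)
    then show "wt n p w * ln (rho n \<beta>1 \<beta>2 w) = prod_list (map (qq p) w) * sum_list (map (\<lambda>a. ln (cc \<beta>1 \<beta>2 a)) w)"
      using w prod_qq[of p w] prod_cc[of \<beta>1 \<beta>2 w] by simp
  qed
  also have "\<dots> = n * (\<Sum>a\<in>{1::int,-1}. qq p a * ln (cc \<beta>1 \<beta>2 a))"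
    by (rule sum_prod_sumlist_words) (auto simp: qq_def)
  finally show ?thesis by (simp add: qq_def cc_def)
qed

lemma SDhat_parts:
  fixes n :: nat and s t :: "int list" and \<beta>1 \<beta>2 p :: real
  assumes n: "n \<ge> 1"
    and s: "s \<in> sign_seqs n" and t: "t \<in> sign_seqs n" and st: "s \<noteq> t"
    and np: "nplus n s = nplus n t"
    and b1: "0 < \<beta>1" "\<beta>1 < 1" and b2: "0 < \<beta>2" "\<beta>2 < 1"
    and p: "0 < p" "p < 1"
  shows "(- (\<Sum>r \<in> sign_seqs n - {s, t}. wt n p r * ln (rho n \<beta>1 \<beta>2 r))
       - (wt n p s + wt n p t) * ln (rho n \<beta>1 \<beta>2 s)) = n * (- p * ln \<beta>1 - (1 - p) * ln \<beta>2)"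
    and "SDhat n s t p \<beta>1 \<beta>2 < SD p \<beta>1 \<beta>2"
proof -
  define SS where "SS = sign_seqs n"
  define Oo where "Oo = SS - {s, t}"
  have fin: "finite Oo" unfolding Oo_def SS_def using finite_sign_seqs by auto
  have SSeq: "SS = insert s (insert t Oo)" "s \<notin> insert t Oo" "t \<notin> Oo"
    using s t st unfolding SS_def Oo_def by auto
  have sumSS: "(\<Sum>r\<in>SS. g r) = g s + g t + (\<Sum>r\<in>Oo. g r)" for g :: "int list \<Rightarrow> real"
    using SSeq fin by simp
  have rho_eq: "rho n \<beta>1 \<beta>2 t = rho n \<beta>1 \<beta>2 s" unfolding rho_def nminus_def using np by simp
  define den where "den = - (\<Sum>r \<in> Oo. wt n p r * ln (rho n \<beta>1 \<beta>2 r))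
       - (wt n p s + wt n p t) * ln (rho n \<beta>1 \<beta>2 s)"
  have "den = - (\<Sum>r\<in>SS. wt n p r * ln (rho n \<beta>1 \<beta>2 r))"
    unfolding den_def sumSS rho_eq by (simp add: algebra_simps)
  also have "\<dots> = n * (- p * ln \<beta>1 - (1 - p) * ln \<beta>2)"
    unfolding SS_def using lyap_sum[OF p b1(1) b2(1), of n] by (simp add: algebra_simps)
  finally have den: "den = n * (- p * ln \<beta>1 - (1 - p) * ln \<beta>2)" .
  then show "(- (\<Sum>r \<in> sign_seqs n - {s, t}. wt n p r * ln (rho n \<beta>1 \<beta>2 r))
       - (wt n p s + wt n p t) * ln (rho n \<beta>1 \<beta>2 s)) = n * (- p * ln \<beta>1 - (1 - p) * ln \<beta>2)"
    unfolding den_def Oo_def SS_def .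
  define H0 where "H0 = - p * ln p - (1 - p) * ln (1 - p)"
  define chi0 where "chi0 = - p * ln \<beta>1 - (1 - p) * ln \<beta>2"
  have chi0: "0 < chi0"
  proof -
    have "ln \<beta>1 < 0" "ln \<beta>2 < 0" using b1 b2 by (auto intro: ln_less_zero)
    then have "0 < p * (- ln \<beta>1)" "0 < (1 - p) * (- ln \<beta>2)" using p
      by (intro mult_pos_pos; simp)+
    then show ?thesis unfolding chi0_def by (simp add: algebra_simps)
  qed
  define ws where "ws = wt n p s"
  define wt' where "wt' = wt n p t"
  have wpos: "0 < ws" "0 < wt'" unfolding ws_def wt'_def using p by (auto intro: wt_pos)
  define num where "num = - (\<Sum>r \<in> Oo. wt n p r * ln (wt n p r)) - (ws + wt') * ln (ws + wt')"
  define \<delta> where "\<delta> = (ws + wt') * ln (ws + wt') - ws * ln ws - wt' * ln wt'"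
  have \<delta>: "0 < \<delta>"
  proof -
    have "ws * ln ws < ws * ln (ws + wt')" using wpos by (intro mult_strict_left_mono) auto
    moreover have "wt' * ln wt' < wt' * ln (ws + wt')" using wpos by (intro mult_strict_left_mono) auto
    ultimately show ?thesis unfolding \<delta>_def by (simp add: algebra_simps)
  qed
  have "num = - (\<Sum>r\<in>SS. wt n p r * ln (wt n p r)) - \<delta>"
    unfolding num_def \<delta>_def sumSS ws_def wt'_def by (simp add: algebra_simps)
  also have "\<dots> = n * H0 - \<delta>"
    unfolding SS_def H0_def using entropy_sum[OF p, of n] by (simp add: algebra_simps)
  finally have num: "num = n * H0 - \<delta>" .
  have "SDhat n s t p \<beta>1 \<beta>2 = num / den"
    unfolding SDhat_def num_def den_def Oo_def SS_def ws_def wt'_def ..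
  also have "\<dots> = (n * H0 - \<delta>) / (n * chi0)" unfolding num den chi0_def ..
  also have "\<dots> < (n * H0) / (n * chi0)"
    using \<delta> chi0 n by (intro divide_strict_right_mono) auto
  also have "\<dots> = SD p \<beta>1 \<beta>2" unfolding SD_def H0_def chi0_def using n by simp
  finally show "SDhat n s t p \<beta>1 \<beta>2 < SD p \<beta>1 \<beta>2" .
qed


lemma SDhat_cont:
  fixes n :: nat and s t :: "int list" and \<beta>1 \<beta>2 :: real
  assumes n: "n \<ge> 1"
    and s: "s \<in> sign_seqs n" and t: "t \<in> sign_seqs n" and st: "s \<noteq> t"
    and np: "nplus n s = nplus n t"
    and b1: "0 < \<beta>1" "\<beta>1 < 1" and b2: "0 < \<beta>2" "\<beta>2 < 1"
  shows "continuous_on {0<..<1} (\<lambda>p. SDhat n s t p \<beta>1 \<beta>2)"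
  unfolding SDhat_def
proof (rule continuous_on_divide)
  have wpos: "p \<in> {0<..<1} \<Longrightarrow> 0 < wt n p r" for p r by (auto intro: wt_pos)
  have cw: "continuous_on {0<..<1} (\<lambda>p. wt n p r)" for r unfolding wt_def by (intro continuous_intros)
  have cwl: "continuous_on {0<..<1} (\<lambda>p. wt n p r * ln (wt n p r))" for r
    using wpos by (intro continuous_intros cw) (metis less_irrefl)
  have cwl2: "continuous_on {0<..<1} (\<lambda>p. (wt n p s + wt n p t) * ln (wt n p s + wt n p t))"
    using wpos by (intro continuous_intros cw) (metis add_pos_pos less_irrefl)
  show "continuous_on {0<..<1} (\<lambda>p. - (\<Sum>r\<in>sign_seqs n - {s, t}. wt n p r * ln (wt n p r)) -
          (wt n p s + wt n p t) * ln (wt n p s + wt n p t))"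
    by (intro continuous_intros cwl cwl2)
  show "continuous_on {0<..<1} (\<lambda>p. - (\<Sum>r\<in>sign_seqs n - {s, t}. wt n p r * ln (rho n \<beta>1 \<beta>2 r)) -
          (wt n p s + wt n p t) * ln (rho n \<beta>1 \<beta>2 s))"
    by (intro continuous_intros cw)
  show "\<forall>p\<in>{0<..<1}. - (\<Sum>r\<in>sign_seqs n - {s, t}. wt n p r * ln (rho n \<beta>1 \<beta>2 r)) -
          (wt n p s + wt n p t) * ln (rho n \<beta>1 \<beta>2 s) \<noteq> 0"
  proof
    fix p :: real assume "p \<in> {0<..<1}"
    then have p: "0 < p" "p < 1" by auto
    have "ln \<beta>1 < 0" "ln \<beta>2 < 0" using b1 b2 by (auto intro: ln_less_zero)
    then have "0 < p * (- ln \<beta>1)" "0 < (1 - p) * (- ln \<beta>2)" using p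
      by (intro mult_pos_pos; simp)+
    then have "0 < - p * ln \<beta>1 - (1 - p) * ln \<beta>2" by (simp add: algebra_simps)
    then have "0 < real n * (- p * ln \<beta>1 - (1 - p) * ln \<beta>2)" using n by (intro mult_pos_pos) auto
    then show "- (\<Sum>r\<in>sign_seqs n - {s, t}. wt n p r * ln (rho n \<beta>1 \<beta>2 r)) -
          (wt n p s + wt n p t) * ln (rho n \<beta>1 \<beta>2 s) \<noteq> 0"
      using SDhat_parts(1)[OF n s t st np b1 b2 p] by (metis less_irrefl)
  qed
qed

theorem proposition2p1:
  fixes n :: nat and s t :: "int list" and \<beta>1 \<beta>2 :: real
  assumes "n \<ge> 3"
    and "s \<in> sign_seqs n" and "t \<in> sign_seqs n" and "s \<noteq> t"
    and "nplus n s = nplus n t"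
    and "0 < \<beta>1" and "\<beta>1 < 1" and "0 < \<beta>2" and "\<beta>2 < 1"
    and "(\<Sum>k = 1..n. real_of_int (s ! (k - 1)) * \<beta>1 ^ nplus k s * \<beta>2 ^ nminus k s
                     - real_of_int (t ! (k - 1)) * \<beta>1 ^ nplus k t * \<beta>2 ^ nminus k t) = 0"
  shows "(\<forall>p \<in> {0<..<1}.
            hausdorff_dim_measure (ssm p \<beta>1 \<beta>2) \<le> SDhat n s t p \<beta>1 \<beta>2
          \<and> SDhat n s t p \<beta>1 \<beta>2 < SD p \<beta>1 \<beta>2)
       \<and> continuous_on {0<..<1} (\<lambda>p. SDhat n s t p \<beta>1 \<beta>2)"
proof -
  have n: "n \<ge> 1" using assms(1) by simp
  show ?thesis
  proof (intro conjI ballI)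
    fix p :: real assume "p \<in> {0<..<1}"
    then have p: "0 < p" "p < 1" by auto
    show "hausdorff_dim_measure (ssm p \<beta>1 \<beta>2) \<le> SDhat n s t p \<beta>1 \<beta>2"
      by (rule dim_bound[OF n assms(2-10) p])
    show "SDhat n s t p \<beta>1 \<beta>2 < SD p \<beta>1 \<beta>2"
      by (rule SDhat_parts(2)[OF n assms(2-9) p])
  next
    show "continuous_on {0<..<1} (\<lambda>p. SDhat n s t p \<beta>1 \<beta>2)"
      by (rule SDhat_cont[OF n assms(2-9)])
  qed
qed


end
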